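(* Let $d\ge 2$ and let $\Delta$ be a $(d-1)$-dimensional balanced simplicial complex, with coloring $\kappa:V(\Delta)\to[d]$, that is doubly Buchsbaum over $\mathbf{k}$. Then for every nonempty proper subset $S\subsetneq[d]$, the rank-selected subcomplex $\Delta_S$ is Buchsbaum* over $\mathbf{k}$. In particular, every rank-selected subcomplex $\Delta_S$ ($\emptyset\ne S\subsetneq[d]$) of a balanced Buchsbaum* complex is Buchsbaum*.
   Context: All simplicial complexes are finite; $\mathbf{k}$ is a fixed field and all homology is reduced simplicial homology with coefficients in $\mathbf{k}$. For a face $\tau$ of $\Delta$: $\mathrm{lk}_\Delta(\tau)=\{\sigma\in\Delta:\sigma\cap\tau=\emptyset,\ \sigma\cup\tau\in\Delta\}$ and $\mathrm{cost}_\Delta(\tau)=\{\sigma\in\Delta:\sigma\not\supseteq\tau\}$. For $A\subseteq V(\Delta)$, $\Delta-A$ is the restriction (induced subcomplex) of $\Delta$ to $V(\Delta)\setminus A$; $\Delta-v=\Delta-\{v\}$. A $(d-1)$-dimensional complex $\Delta$ is Cohen–Macaulay (CM) over $\mathbf{k}$ if for every face $F$ (including $\emptyset$), $\widetilde H_i(\mathrm{lk}_\Delta F)=0$ for all $i<d-1-|F|$; it is Buchsbaum over $\mathbf{k}$ if it is pure and this holds for every nonempty face $F$. $\Delta$ is doubly Buchsbaum if it is Buchsbaum and $\Delta-v$ is Buchsbaum of dimension $d-1$ for every vertex $v$. A $(d-1)$-dimensional Buchsbaum complex $\Delta$ is Buchsbaum* over $\mathbf{k}$ if for every point $p$ of the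 geometric realization $|\Delta|$, the canonical map $\widetilde H_{d-1}(|\Delta|)\to \widetilde H_{d-1}(|\Delta|,|\Delta|-p)$ is surjective (equivalently, for every face $\tau$, the map $\widetilde H_{d-1}(\Delta)\to\widetilde H_{d-1}(\Delta,\mathrm{cost}_\Delta\tau)$ induced by inclusion is surjective). $\Delta$ is balanced if there is a coloring $\kappa:V(\Delta)\to[d]$ with $\kappa(u)\neq\kappa(v)$ for every edge $\{u,v\}$; for $S\subseteq[d]$, the rank-selected subcomplex is $\Delta_S=\{\tau\in\Delta:\kappa(\tau)\subseteq S\}$. (It is known that Buchsbaum* complexes are doubly Buchsbaum.) *)

theory Defs
  imports Main
begin

text \<open>Finite abstract simplicial complexes on a linearly ordered vertex type
 (the order only fixes orientations of simplices). Faces are finite vertex sets;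
 the complex is nonempty, so it contains the empty face.\<close>

definition simplicial_complex :: "'a set set \<Rightarrow> bool" where
  "simplicial_complex \<Delta> \<longleftrightarrow> finite \<Delta> \<and> \<Delta> \<noteq> {} \<and> (\<forall>\<sigma>\<in>\<Delta>. finite \<sigma>)
     \<and> (\<forall>\<sigma>\<in>\<Delta>. \<forall>\<tau>. \<tau> \<subseteq> \<sigma> \<longrightarrow> \<tau> \<in> \<Delta>)"

definition vertices :: "'a set set \<Rightarrow> 'a set" where
  "vertices \<Delta> = \<Union>\<Delta>"

definition link :: "'a set set \<Rightarrow> 'a set \<Rightarrow> 'a set set" where
  "link \<Delta> \<tau> = {\<sigma>\<in>\<Delta>. \<sigma> \<inter> \<tau> = {} \<and> \<sigma> \<union> \<tau> \<in> \<Delta>}"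

definition cost :: "'a set set \<Rightarrow> 'a set \<Rightarrow> 'a set set" where
  "cost \<Delta> \<tau> = {\<sigma>\<in>\<Delta>. \<not> \<tau> \<subseteq> \<sigma>}"

definition delete :: "'a set set \<Rightarrow> 'a set \<Rightarrow> 'a set set" where
  "delete \<Delta> A = {\<sigma>\<in>\<Delta>. \<sigma> \<inter> A = {}}"

text \<open>Simplicial chains: a chain with index m lives in homological degree m-1
 (so m = 0 is the degree -1 of reduced homology, spanned by the empty face).\<close>
definition chains :: "'a set set \<Rightarrow> nat \<Rightarrow> ('a set \<Rightarrow> 'k::zero) set" where
  "chains \<Delta> m = {c. \<forall>\<sigma>. c \<sigma> \<noteq> 0 \<longrightarrow> \<sigma> \<in> \<Delta> \<and> card \<sigma> = m}"

definition bd :: "'a::linorder set set \<Rightarrow> ('a set \<Rightarrow> 'k::comm_ring_1) \<Rightarrow> 'a set \<Rightarrow> 'k" where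
  "bd \<Delta> c \<sigma> = (\<Sum>v\<in>{v. v \<notin> \<sigma> \<and> insert v \<sigma> \<in> \<Delta>}.
       (- 1) ^ card {u\<in>\<sigma>. u < v} * c (insert v \<sigma>))"

text \<open>Vanishing of reduced homology over the field 'k in degree m-1.\<close>
definition hvanish :: "'k::field itself \<Rightarrow> 'a::linorder set set \<Rightarrow> nat \<Rightarrow> bool" where
  "hvanish K \<Delta> m \<longleftrightarrow>
     (\<forall>c::'a set \<Rightarrow> 'k. c \<in> chains \<Delta> m \<and> bd \<Delta> c = (\<lambda>_. 0)
        \<longrightarrow> (\<exists>b \<in> chains \<Delta> (Suc m). bd \<Delta> b = c))"

text \<open>Surjectivity of the map H_(m-1)(Delta) -> H_(m-1)(Delta, Gamma) induced by inclusion
 (Gamma a subcomplex): every relative cycle is homologous (rel Gamma) to an absolute cycle.\<close>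
definition rel_surj :: "'k::field itself \<Rightarrow> 'a::linorder set set \<Rightarrow> 'a set set \<Rightarrow> nat \<Rightarrow> bool" where
  "rel_surj K \<Delta> \<Gamma> m \<longleftrightarrow>
     (\<forall>c::'a set \<Rightarrow> 'k. c \<in> chains \<Delta> m \<and> bd \<Delta> c \<in> chains \<Gamma> (m - 1)
        \<longrightarrow> (\<exists>z \<in> chains \<Delta> m. bd \<Delta> z = (\<lambda>_. 0) \<and>
               (\<exists>b \<in> chains \<Delta> (Suc m). (\<lambda>\<sigma>. c \<sigma> - z \<sigma> - bd \<Delta> b \<sigma>) \<in> chains \<Gamma> m)))"

text \<open>Delta has dimension n-1.\<close>
definition has_dim :: "'a set set \<Rightarrow> nat \<Rightarrow> bool" where
  "has_dim \<Delta> n \<longleftrightarrow> (\<forall>\<sigma>\<in>\<Delta>. card \<sigma> \<le> n) \<and> (\<exists>\<sigma>\<in>\<Delta>. card \<sigma> = n)"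

definition pure :: "'a set set \<Rightarrow> bool" where
  "pure \<Delta> \<longleftrightarrow> (\<forall>\<sigma>\<in>\<Delta>. \<forall>\<tau>\<in>\<Delta>. (\<forall>\<rho>\<in>\<Delta>. \<sigma> \<subseteq> \<rho> \<longrightarrow> \<rho> = \<sigma>) \<longrightarrow> card \<tau> \<le> card \<sigma>)"

definition buchsbaum :: "'k::field itself \<Rightarrow> 'a::linorder set set \<Rightarrow> nat \<Rightarrow> bool" where
  "buchsbaum K \<Delta> n \<longleftrightarrow> simplicial_complex \<Delta> \<and> has_dim \<Delta> n \<and> pure \<Delta> \<and>
     (\<forall>F\<in>\<Delta>. F \<noteq> {} \<longrightarrow> (\<forall>m. m + card F < n \<longrightarrow> hvanish K (link \<Delta> F) m))"

definition doubly_buchsbaum :: "'k::field itself \<Rightarrow> 'a::linorder set set \<Rightarrow> nat \<Rightarrow> bool" where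
  "doubly_buchsbaum K \<Delta> n \<longleftrightarrow> buchsbaum K \<Delta> n \<and>
     (\<forall>v\<in>vertices \<Delta>. buchsbaum K (delete \<Delta> {v}) n)"

text \<open>Buchsbaum* of dimension n-1 (face version of the definition):
 H_(n-1)(Delta) -> H_(n-1)(Delta, cost tau) surjective for every face tau.\<close>
definition buchsbaum_star :: "'k::field itself \<Rightarrow> 'a::linorder set set \<Rightarrow> nat \<Rightarrow> bool" where
  "buchsbaum_star K \<Delta> n \<longleftrightarrow> buchsbaum K \<Delta> n \<and>
     (\<forall>\<tau>\<in>\<Delta>. rel_surj K \<Delta> (cost \<Delta> \<tau>) n)"

definition balanced :: "'a set set \<Rightarrow> nat \<Rightarrow> ('a \<Rightarrow> nat) \<Rightarrow> bool" where
  "balanced \<Delta> d \<kappa> \<longleftrightarrow> (\<forall>v\<in>vertices \<Delta>. \<kappa> v \<in> {1..d}) \<and>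
     (\<forall>u v. {u, v} \<in> \<Delta> \<and> u \<noteq> v \<longrightarrow> \<kappa> u \<noteq> \<kappa> v)"

definition rank_selected :: "'a set set \<Rightarrow> ('a \<Rightarrow> nat) \<Rightarrow> nat set \<Rightarrow> 'a set set" where
  "rank_selected \<Delta> \<kappa> S = {\<tau>\<in>\<Delta>. \<kappa> ` \<tau> \<subseteq> S}"

end

theory Submission
  imports Defs
begin


definition osgn :: "'a::linorder \<Rightarrow> 'a set \<Rightarrow> 'k::comm_ring_1" where
  "osgn v \<sigma> = (- 1) ^ card {u\<in>\<sigma>. u < v}"

definition cone :: "'a::linorder \<Rightarrow> ('a set \<Rightarrow> 'k::comm_ring_1) \<Rightarrow> 'a set \<Rightarrow> 'k" where
  "cone v \<gamma> \<rho> = (if v \<in> \<rho> then osgn v (\<rho> - {v}) * \<gamma> (\<rho> - {v}) else 0)"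

definition restr :: "'a::linorder \<Rightarrow> ('a set \<Rightarrow> 'k::comm_ring_1) \<Rightarrow> 'a set \<Rightarrow> 'k" where
  "restr v c \<sigma> = (if v \<in> \<sigma> then 0 else osgn v \<sigma> * c (insert v \<sigma>))"

definition supp :: "'a set set \<Rightarrow> ('a set \<Rightarrow> 'k::zero) \<Rightarrow> bool" where
  "supp \<Lambda> c \<longleftrightarrow> (\<forall>\<sigma>. c \<sigma> \<noteq> 0 \<longrightarrow> \<sigma> \<in> \<Lambda>)"

lemma osgn_sq: "osgn v \<sigma> * osgn v \<sigma> = (1::'k::comm_ring_1)"
  unfolding osgn_def by (simp add: power_mult_distrib[symmetric] flip: power_add) 

lemma bd_alt:
  assumes fin: "finite V" and sub: "\<Union>\<Lambda> \<subseteq> V" and s: "supp \<Lambda> c"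
  shows "bd \<Lambda> c \<sigma> = (\<Sum>v\<in>V - \<sigma>. (- 1) ^ card {u\<in>\<sigma>. u < v} * c (insert v \<sigma>))"
proof -
  have A: "{v. v \<notin> \<sigma> \<and> insert v \<sigma> \<in> \<Lambda>} \<subseteq> V - \<sigma>" using sub by blast
  show ?thesis unfolding bd_def
    apply (rule sum.mono_neutral_left[OF _ A])
    using fin s by (auto simp: supp_def) (metis mult_zero_right)
qed

lemma card_ins_less:
  assumes "finite \<sigma>" "v \<notin> \<sigma>"
  shows "card {u\<in>insert v \<sigma>. u < w} = (if v < w then Suc (card {u\<in>\<sigma>. u < w}) else card {u\<in>\<sigma>. u < w})"
proof -
  have f: "finite {u\<in>\<sigma>. u < w}" using assms by simp
  show ?thesis
  proof (cases "v < w")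
    case True
    hence "{u\<in>insert v \<sigma>. u < w} = insert v {u\<in>\<sigma>. u < w}" by auto
    thus ?thesis using True f assms by simp
  next
    case False
    hence "{u\<in>insert v \<sigma>. u < w} = {u\<in>\<sigma>. u < w}" by auto
    thus ?thesis using False by simp
  qed
qed

lemma osgn_swap:
  assumes "finite \<sigma>" "v \<notin> \<sigma>" "w \<notin> \<sigma>" "v \<noteq> w"
  shows "osgn w (insert v \<sigma>) * osgn v (insert w \<sigma>) = - (osgn v \<sigma> * (osgn w \<sigma> :: 'k::comm_ring_1))"
proof -
  have a: "card {u\<in>insert v \<sigma>. u < w} = (if v < w then Suc (card {u\<in>\<sigma>. u < w}) else card {u\<in>\<sigma>. u < w})"
    using assms by (intro card_ins_less) auto
  have b: "card {u\<in>insert w \<sigma>. u < v} = (if w < v then Suc (card {u\<in>\<sigma>. u < v}) else card {u\<in>\<sigma>. u < v})"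
    using assms by (intro card_ins_less) auto
  show ?thesis
  proof (cases "v < w")
    case True
    hence "\<not> w < v" by auto
    thus ?thesis using True a b unfolding osgn_def by simp
  next
    case False
    hence "w < v" using assms(4) by auto
    thus ?thesis using False a b unfolding osgn_def by simp
  qed
qed

lemma supp_mono: "supp A c \<Longrightarrow> A \<subseteq> B \<Longrightarrow> supp B c"
  unfolding supp_def by blast

lemma link_sub: "link \<Lambda> \<tau> \<subseteq> \<Lambda>" unfolding link_def by blast

definition bdV :: "'a::linorder set \<Rightarrow> ('a set \<Rightarrow> 'k::comm_ring_1) \<Rightarrow> 'a set \<Rightarrow> 'k" where
  "bdV V c \<sigma> = (\<Sum>v\<in>V - \<sigma>. osgn v \<sigma> * c (insert v \<sigma>))"

definition fs :: "('a set \<Rightarrow> 'k::zero) \<Rightarrow> bool" where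
  "fs c \<longleftrightarrow> (\<forall>\<sigma>. c \<sigma> \<noteq> 0 \<longrightarrow> finite \<sigma>)"

lemma bd_eq:
  assumes "finite V" "\<Union>\<Lambda> \<subseteq> V" "supp \<Lambda> c"
  shows "bd \<Lambda> c = bdV V c"
  using bd_alt[OF assms] unfolding bdV_def osgn_def by auto

lemma cone_bdV:
  fixes \<gamma> :: "'a::linorder set \<Rightarrow> 'k::comm_ring_1"
  assumes fin: "finite V" and vV: "v \<in> V"
    and gf: "fs \<gamma>" and gv: "\<And>\<sigma>. v \<in> \<sigma> \<Longrightarrow> \<gamma> \<sigma> = 0"
  shows "bdV V (cone v \<gamma>) \<rho> = \<gamma> \<rho> - cone v (bdV V \<gamma>) \<rho>"
proof (cases "v \<in> \<rho>")
  case False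
  have "bdV V (cone v \<gamma>) \<rho> = osgn v \<rho> * cone v \<gamma> (insert v \<rho>)
       + (\<Sum>w\<in>(V - \<rho>) - {v}. osgn w \<rho> * cone v \<gamma> (insert w \<rho>))"
    unfolding bdV_def using vV False fin by (subst sum.remove[of _ v]) auto
  also have "(\<Sum>w\<in>(V - \<rho>) - {v}. osgn w \<rho> * cone v \<gamma> (insert w \<rho>)) = 0"
    using False by (intro sum.neutral) (auto simp: cone_def)
  also have "osgn v \<rho> * cone v \<gamma> (insert v \<rho>) = \<gamma> \<rho>"
    using False by (simp add: cone_def mult.assoc[symmetric] osgn_sq)
  finally have "bdV V (cone v \<gamma>) \<rho> = \<gamma> \<rho>" by simp
  moreover have "cone v (bdV V \<gamma>) \<rho> = 0" using False by (simp add: cone_def)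
  ultimately show ?thesis by simp
next
  case True
  define \<rho>0 where "\<rho>0 = \<rho> - {v}"
  have r: "\<rho> = insert v \<rho>0" and v0: "v \<notin> \<rho>0" unfolding \<rho>0_def using True by blast+
  have "bdV V (cone v \<gamma>) \<rho> = (\<Sum>w\<in>V - \<rho>. osgn w \<rho> * cone v \<gamma> (insert w \<rho>))"
    unfolding bdV_def ..
  also have "\<dots> = (\<Sum>w\<in>V - \<rho>. - (osgn v \<rho>0 * (osgn w \<rho>0 * \<gamma> (insert w \<rho>0))))"
  proof (rule sum.cong[OF refl])
    fix w assume w: "w \<in> V - \<rho>"
    hence wv: "w \<noteq> v" "w \<notin> \<rho>0" using r by auto
    have e: "insert w \<rho> - {v} = insert w \<rho>0" using r wv v0 by auto
    have cw: "cone v \<gamma> (insert w \<rho>) = osgn v (insert w \<rho>0) * \<gamma> (insert w \<rho>0)"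
      using \<open>v \<in> \<rho>\<close> unfolding cone_def e by simp
    show "osgn w \<rho> * cone v \<gamma> (insert w \<rho>) = - (osgn v \<rho>0 * (osgn w \<rho>0 * \<gamma> (insert w \<rho>0)))"
    proof (cases "\<gamma> (insert w \<rho>0) = 0")
      case True thus ?thesis using cw by simp
    next
      case False
      hence "finite (insert w \<rho>0)" using gf unfolding fs_def by (elim allE impE)
      hence "finite \<rho>0" by simp
      from osgn_swap[OF this v0 wv(2) wv(1)[symmetric]]
      have sw: "osgn w (insert v \<rho>0) * osgn v (insert w \<rho>0) = - (osgn v \<rho>0 * (osgn w \<rho>0 :: 'k))" .
      have "osgn w \<rho> * cone v \<gamma> (insert w \<rho>) = (osgn w (insert v \<rho>0) * osgn v (insert w \<rho>0)) * \<gamma> (insert w \<rho>0)"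
        unfolding cw using r by (simp add: mult.assoc)
      also have "\<dots> = - (osgn v \<rho>0 * osgn w \<rho>0) * \<gamma> (insert w \<rho>0)" by (simp only: sw)
      finally show ?thesis by simp
    qed
  qed
  also have "\<dots> = - (osgn v \<rho>0 * (\<Sum>w\<in>V - \<rho>. osgn w \<rho>0 * \<gamma> (insert w \<rho>0)))"
    by (simp add: sum_negf sum_distrib_left)
  also have "(\<Sum>w\<in>V - \<rho>. osgn w \<rho>0 * \<gamma> (insert w \<rho>0)) = (\<Sum>w\<in>V - \<rho>0. osgn w \<rho>0 * \<gamma> (insert w \<rho>0))"
  proof -
    have eq: "V - \<rho>0 = insert v (V - \<rho>)" and nv: "v \<notin> V - \<rho>" using r vV v0 by auto
    have "(\<Sum>w\<in>V - \<rho>0. osgn w \<rho>0 * \<gamma> (insert w \<rho>0)) = osgn v \<rho>0 * \<gamma> (insert v \<rho>0) + (\<Sum>w\<in>V - \<rho>. osgn w \<rho>0 * \<gamma> (insert w \<rho>0))"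
      unfolding eq by (rule sum.insert) (use fin nv in auto)
    moreover have "\<gamma> (insert v \<rho>0) = 0" by (rule gv) simp
    ultimately show ?thesis by simp
  qed
  also have "\<dots> = bdV V \<gamma> \<rho>0" unfolding bdV_def ..
  finally have 1: "bdV V (cone v \<gamma>) \<rho> = - (osgn v \<rho>0 * bdV V \<gamma> \<rho>0)" .
  have 2: "cone v (bdV V \<gamma>) \<rho> = osgn v \<rho>0 * bdV V \<gamma> \<rho>0"
    unfolding cone_def \<rho>0_def using True by simp
  show ?thesis unfolding 1 2 using gv[OF True] by simp
qed


lemma cone_restr: "cone v (restr v c) \<rho> = (if v \<in> \<rho> then c \<rho> else (0::'k::comm_ring_1))"
proof (cases "v \<in> \<rho>")
  case True
  have e: "insert v (\<rho> - {v}) = \<rho>" using True by blast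
  show ?thesis using True unfolding cone_def restr_def e
    by (simp add: mult.assoc[symmetric] osgn_sq)
qed (simp add: cone_def)

lemma restr_vanish: "v \<in> \<sigma> \<Longrightarrow> restr v c \<sigma> = 0"
  by (simp add: restr_def)

lemma fs_restr: "fs c \<Longrightarrow> fs (restr v c)"
  unfolding fs_def restr_def by (auto split: if_splits) (metis finite_insert mult_zero_right)

lemma fs_cone: "fs \<gamma> \<Longrightarrow> fs (cone v \<gamma>)"
  unfolding fs_def cone_def by (auto split: if_splits) (metis finite_Diff2 finite.emptyI finite_insert mult_zero_right)

lemma bdV_add: "bdV V (\<lambda>\<rho>. a \<rho> + b \<rho>) \<sigma> = bdV V a \<sigma> + bdV V b \<sigma>"
  unfolding bdV_def by (simp add: sum.distrib distrib_left)

lemma bdV_diff: "bdV V (\<lambda>\<rho>. a \<rho> - b \<rho>) \<sigma> = bdV V a \<sigma> - bdV V b \<sigma>"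
  unfolding bdV_def by (simp add: sum_subtractf right_diff_distrib)

lemma bdV_uminus: "bdV V (\<lambda>\<rho>. - a \<rho>) \<sigma> = - bdV V a \<sigma>"
  unfolding bdV_def by (simp add: sum_negf)

lemma bdV_zero: "bdV V (\<lambda>\<rho>. 0) \<sigma> = 0"
  unfolding bdV_def by simp

lemma bdV_sum: "bdV V (\<lambda>\<rho>. \<Sum>i\<in>I. f i \<rho>) \<sigma> = (\<Sum>i\<in>I. bdV V (f i) \<sigma>)"
  unfolding bdV_def by (simp add: sum_distrib_left sum.swap[of _ I])

lemma bdV_noV: "(\<And>\<rho>. v \<in> \<rho> \<Longrightarrow> c \<rho> = 0) \<Longrightarrow> v \<in> \<sigma> \<Longrightarrow> bdV V c \<sigma> = 0"
  unfolding bdV_def by (intro sum.neutral) auto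

lemma cone_sum: "cone v (\<lambda>\<sigma>. \<Sum>i\<in>I. f i \<sigma>) \<rho> = (\<Sum>i\<in>I. cone v (f i) \<rho>)"
  unfolding cone_def by (simp add: sum_distrib_left)

lemma bdV_restr:
  fixes c :: "'a::linorder set \<Rightarrow> 'k::comm_ring_1"
  assumes fin: "finite V" and vV: "v \<in> V" and cf: "fs c"
  shows "bdV V (restr v c) \<sigma> = - restr v (bdV V c) \<sigma>"
proof -
  define \<gamma> where "\<gamma> = restr v c"
  define c' where "c' = (\<lambda>\<rho>. if v \<in> \<rho> then 0 else c \<rho>)"
  have ceq: "c = (\<lambda>\<rho>. cone v \<gamma> \<rho> + c' \<rho>)"
    unfolding \<gamma>_def c'_def cone_restr by auto
  have gf: "fs \<gamma>" unfolding \<gamma>_def by (rule fs_restr[OF cf])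
  have gv: "\<And>\<sigma>. v \<in> \<sigma> \<Longrightarrow> \<gamma> \<sigma> = 0" unfolding \<gamma>_def by (rule restr_vanish)
  show ?thesis
  proof (cases "v \<in> \<sigma>")
    case True
    thus ?thesis using bdV_noV[of v \<gamma>, OF gv True] by (simp add: restr_def \<gamma>_def)
  next
    case False
    have "restr v (bdV V c) \<sigma> = osgn v \<sigma> * bdV V c (insert v \<sigma>)"
      using False by (simp add: restr_def)
    also have "bdV V c (insert v \<sigma>) = bdV V (cone v \<gamma>) (insert v \<sigma>) + bdV V c' (insert v \<sigma>)"
      by (subst ceq) (rule bdV_add)
    also have "bdV V c' (insert v \<sigma>) = 0" by (rule bdV_noV) (auto simp: c'_def)
    also have "bdV V (cone v \<gamma>) (insert v \<sigma>) = \<gamma> (insert v \<sigma>) - cone v (bdV V \<gamma>) (insert v \<sigma>)"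
      by (rule cone_bdV[OF fin vV gf gv])
    also have "cone v (bdV V \<gamma>) (insert v \<sigma>) = osgn v \<sigma> * bdV V \<gamma> \<sigma>"
    proof -
      have "insert v \<sigma> - {v} = \<sigma>" using False by auto
      thus ?thesis unfolding cone_def by simp
    qed
    finally have "restr v (bdV V c) \<sigma> = osgn v \<sigma> * (0 - osgn v \<sigma> * bdV V \<gamma> \<sigma>)" using gv by simp
    hence "restr v (bdV V c) \<sigma> = - bdV V \<gamma> \<sigma>" by (simp add: mult.assoc[symmetric] osgn_sq)
    thus ?thesis unfolding \<gamma>_def by simp
  qed
qed




definition bal :: "'a set set \<Rightarrow> nat set \<Rightarrow> ('a \<Rightarrow> nat) \<Rightarrow> bool" where
  "bal \<Lambda> C \<kappa> \<longleftrightarrow> (\<forall>\<sigma>\<in>\<Lambda>. \<kappa> ` \<sigma> \<subseteq> C \<and> inj_on \<kappa> \<sigma>)"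

definition CMh :: "'k::field itself \<Rightarrow> 'a::linorder set set \<Rightarrow> nat \<Rightarrow> bool" where
  "CMh K \<Lambda> n \<longleftrightarrow> (\<forall>\<sigma>\<in>\<Lambda>. \<forall>m. m + card \<sigma> < n \<longrightarrow> hvanish K (link \<Lambda> \<sigma>) m)"

definition DC :: "'k::field itself \<Rightarrow> 'a::linorder set set \<Rightarrow> nat \<Rightarrow> bool" where
  "DC K \<Lambda> n \<longleftrightarrow> CMh K \<Lambda> n \<and>
     (\<forall>\<sigma>\<in>\<Lambda>. \<forall>w. \<forall>m. m + card \<sigma> < n \<longrightarrow> hvanish K (delete (link \<Lambda> \<sigma>) {w}) m)"

definition extp :: "'k::field itself \<Rightarrow> 'a::linorder set set \<Rightarrow> 'a set \<Rightarrow> nat \<Rightarrow> bool" where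
  "extp K \<Gamma> \<tau> n \<longleftrightarrow> (\<forall>c::'a set \<Rightarrow> 'k. c \<in> chains \<Gamma> n \<and> (\<forall>\<rho>. \<tau> \<subseteq> \<rho> \<longrightarrow> bd \<Gamma> c \<rho> = 0)
      \<longrightarrow> (\<exists>z\<in>chains \<Gamma> n. bd \<Gamma> z = (\<lambda>_. 0) \<and> (\<forall>\<rho>. \<tau> \<subseteq> \<rho> \<longrightarrow> z \<rho> = c \<rho>)))"

lemma sc_closed: "simplicial_complex \<Lambda> \<Longrightarrow> \<sigma> \<in> \<Lambda> \<Longrightarrow> \<tau> \<subseteq> \<sigma> \<Longrightarrow> \<tau> \<in> \<Lambda>"
  unfolding simplicial_complex_def by blast

lemma sc_empty: "simplicial_complex \<Lambda> \<Longrightarrow> {} \<in> \<Lambda>"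
  unfolding simplicial_complex_def by blast

lemma sc_finite_face: "simplicial_complex \<Lambda> \<Longrightarrow> \<sigma> \<in> \<Lambda> \<Longrightarrow> finite \<sigma>"
  unfolding simplicial_complex_def by blast

lemma sc_finV: "simplicial_complex \<Lambda> \<Longrightarrow> finite (\<Union>\<Lambda>)"
  unfolding simplicial_complex_def by blast

lemma sc_sub:
  assumes "simplicial_complex \<Lambda>" "\<Gamma> \<subseteq> \<Lambda>" "{} \<in> \<Gamma>" "\<And>\<sigma> \<tau>. \<sigma> \<in> \<Gamma> \<Longrightarrow> \<tau> \<subseteq> \<sigma> \<Longrightarrow> \<tau> \<in> \<Gamma>"
  shows "simplicial_complex \<Gamma>"
  using assms unfolding simplicial_complex_def by (meson empty_iff finite_subset subsetD)

lemma sc_link: "simplicial_complex \<Lambda> \<Longrightarrow> F \<in> \<Lambda> \<Longrightarrow> simplicial_complex (link \<Lambda> F)"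
  apply (rule sc_sub[of \<Lambda>])
     apply (auto simp: link_def intro: sc_empty)
  apply (meson sc_closed)
  by (meson Un_mono order_refl sc_closed)

lemma sc_rank: "simplicial_complex \<Lambda> \<Longrightarrow> simplicial_complex (rank_selected \<Lambda> \<kappa> S)"
  apply (rule sc_sub[of \<Lambda>])
     apply (auto simp: rank_selected_def intro: sc_empty)
  by (meson sc_closed)

lemma sc_delete: "simplicial_complex \<Lambda> \<Longrightarrow> simplicial_complex (delete \<Lambda> A)"
  apply (rule sc_sub[of \<Lambda>])
     apply (auto simp: delete_def intro: sc_empty)
  by (meson sc_closed)

lemma link_empty: "link \<Lambda> {} = \<Lambda>" unfolding link_def by auto

lemma rank_all: "bal \<Lambda> C \<kappa> \<Longrightarrow> rank_selected \<Lambda> \<kappa> C = \<Lambda>"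
  unfolding bal_def rank_selected_def by auto

lemma link_link:
  assumes "simplicial_complex \<Lambda>" "F \<inter> G = {}"
  shows "link (link \<Lambda> F) G = link \<Lambda> (F \<union> G)"
  using assms unfolding link_def
  apply auto
     apply (metis Un_assoc Un_commute)
    apply (meson Un_upper1 sc_closed sup.mono order_refl)
   apply (meson Un_upper1 sc_closed sup.mono order_refl Un_upper2)
  by (metis Un_assoc Un_commute)

lemma link_delete: "w \<notin> F \<Longrightarrow> link (delete \<Lambda> {w}) F = delete (link \<Lambda> F) {w}"
  unfolding link_def delete_def by auto

lemma link_rank: "\<kappa> ` F \<subseteq> S \<Longrightarrow> link (rank_selected \<Lambda> \<kappa> S) F = rank_selected (link \<Lambda> F) \<kappa> S"
  unfolding link_def rank_selected_def by auto

lemma delete_rank: "delete (rank_selected \<Lambda> \<kappa> S) A = rank_selected (delete \<Lambda> A) \<kappa> S"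
  unfolding delete_def rank_selected_def by auto

lemma bal_mono: "bal \<Lambda> C \<kappa> \<Longrightarrow> \<Gamma> \<subseteq> \<Lambda> \<Longrightarrow> bal \<Gamma> C \<kappa>"
  unfolding bal_def by blast

lemma bal_link:
  assumes "bal \<Lambda> C \<kappa>"
  shows "bal (link \<Lambda> F) (C - \<kappa> ` F) \<kappa>"
  unfolding bal_def
proof
  fix \<sigma> assume s: "\<sigma> \<in> link \<Lambda> F"
  hence u: "\<sigma> \<union> F \<in> \<Lambda>" "\<sigma> \<inter> F = {}" "\<sigma> \<in> \<Lambda>" by (auto simp: link_def)
  hence "inj_on \<kappa> (\<sigma> \<union> F)" "\<kappa> ` (\<sigma> \<union> F) \<subseteq> C" using assms by (auto simp: bal_def)
  thus "\<kappa> ` \<sigma> \<subseteq> C - \<kappa> ` F \<and> inj_on \<kappa> \<sigma>" using u(2) 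
    by (auto simp: inj_on_def)
qed

lemma rank_link_colors:
  assumes "bal \<Lambda> C \<kappa>"
  shows "rank_selected (link \<Lambda> F) \<kappa> S = rank_selected (link \<Lambda> F) \<kappa> (S - \<kappa> ` F)"
  using bal_link[OF assms, of F] unfolding rank_selected_def bal_def by blast

lemma card_colors:
  assumes "bal \<Lambda> C \<kappa>" "\<sigma> \<in> \<Lambda>"
  shows "card (\<kappa> ` \<sigma>) = card \<sigma>"
  using assms unfolding bal_def by (simp add: card_image)


lemma chains_supp: "c \<in> chains \<Gamma> m \<Longrightarrow> supp \<Gamma> c"
  unfolding chains_def supp_def by blast

lemma chains_fs: "simplicial_complex \<Gamma> \<Longrightarrow> c \<in> chains \<Gamma> m \<Longrightarrow> fs c"
  unfolding chains_def fs_def using sc_finite_face by blast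

lemma hvanish_bdV:
  fixes K :: "'k::field itself"
  assumes "finite V" "\<Union>\<Gamma> \<subseteq> V"
  shows "hvanish K \<Gamma> m \<longleftrightarrow> (\<forall>c::'a::linorder set \<Rightarrow> 'k::field. c\<in>chains \<Gamma> m \<and> (\<forall>\<sigma>. bdV V c \<sigma> = 0)
     \<longrightarrow> (\<exists>b\<in>chains \<Gamma> (Suc m). \<forall>\<sigma>. bdV V b \<sigma> = c \<sigma>))"
proof -
  have e: "\<And>c l. c \<in> chains \<Gamma> l \<Longrightarrow> bd \<Gamma> c = bdV V c"
    by (rule bd_eq[OF assms chains_supp])
  show ?thesis
  proof (intro iffI allI impI)
    fix c :: "'a set \<Rightarrow> 'k" assume H: "hvanish K \<Gamma> m" and c: "c \<in> chains \<Gamma> m \<and> (\<forall>\<sigma>. bdV V c \<sigma> = 0)"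
    hence "bd \<Gamma> c = (\<lambda>_. 0)" using e[of c m] by auto
    hence cc: "c \<in> chains \<Gamma> m \<and> bd \<Gamma> c = (\<lambda>_. 0)" using c by blast
    have "\<exists>b\<in>chains \<Gamma> (Suc m). bd \<Gamma> b = c" using H[unfolded hvanish_def, THEN spec[of _ c], THEN mp, OF cc] .
    then obtain b where b: "b \<in> chains \<Gamma> (Suc m)" "bd \<Gamma> b = c" by blast
    thus "\<exists>b\<in>chains \<Gamma> (Suc m). \<forall>\<sigma>. bdV V b \<sigma> = c \<sigma>" using e[OF b(1)] by auto
  next
    assume H: "\<forall>c::'a set \<Rightarrow> 'k. c \<in> chains \<Gamma> m \<and> (\<forall>\<sigma>. bdV V c \<sigma> = 0) \<longrightarrow> (\<exists>b\<in>chains \<Gamma> (Suc m). \<forall>\<sigma>. bdV V b \<sigma> = c \<sigma>)"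
    show "hvanish K \<Gamma> m" unfolding hvanish_def
    proof (intro allI impI)
      fix c :: "'a set \<Rightarrow> 'k" assume c: "c \<in> chains \<Gamma> m \<and> bd \<Gamma> c = (\<lambda>_. 0)"
      hence "\<forall>\<sigma>. bdV V c \<sigma> = 0" using e[of c m] by (metis fun_eq_iff)
      hence "\<exists>b\<in>chains \<Gamma> (Suc m). \<forall>\<sigma>. bdV V b \<sigma> = c \<sigma>" using c by (intro H[rule_format]) auto
      then obtain b where b: "b \<in> chains \<Gamma> (Suc m)" "\<forall>\<sigma>. bdV V b \<sigma> = c \<sigma>" by blast
      thus "\<exists>b\<in>chains \<Gamma> (Suc m). bd \<Gamma> b = c" using e[OF b(1)] b by (intro bexI[of _ b]) (auto simp: fun_eq_iff)
    qed
  qed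
qed

lemma extp_bdV:
  fixes K :: "'k::field itself"
  assumes "finite V" "\<Union>\<Gamma> \<subseteq> V"
  shows "extp K \<Gamma> \<tau> n \<longleftrightarrow> (\<forall>c::'a::linorder set \<Rightarrow> 'k::field. c\<in>chains \<Gamma> n \<and> (\<forall>\<rho>. \<tau> \<subseteq> \<rho> \<longrightarrow> bdV V c \<rho> = 0)
     \<longrightarrow> (\<exists>z\<in>chains \<Gamma> n. (\<forall>\<sigma>. bdV V z \<sigma> = 0) \<and> (\<forall>\<rho>. \<tau> \<subseteq> \<rho> \<longrightarrow> z \<rho> = c \<rho>)))"
proof -
  have e: "\<And>c l. c \<in> chains \<Gamma> l \<Longrightarrow> bd \<Gamma> c = bdV V c"
    by (rule bd_eq[OF assms chains_supp])
  show ?thesis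
  proof (intro iffI allI impI)
    fix c :: "'a set \<Rightarrow> 'k" assume H: "extp K \<Gamma> \<tau> n" and c: "c \<in> chains \<Gamma> n \<and> (\<forall>\<rho>. \<tau> \<subseteq> \<rho> \<longrightarrow> bdV V c \<rho> = 0)"
    hence "\<forall>\<rho>. \<tau> \<subseteq> \<rho> \<longrightarrow> bd \<Gamma> c \<rho> = 0" using e[of c n] by auto
    hence "\<exists>z\<in>chains \<Gamma> n. bd \<Gamma> z = (\<lambda>_. 0) \<and> (\<forall>\<rho>. \<tau> \<subseteq> \<rho> \<longrightarrow> z \<rho> = c \<rho>)"
      using H[unfolded extp_def, THEN spec[of _ c], THEN mp] c by blast
    then obtain z where z: "z \<in> chains \<Gamma> n" "bd \<Gamma> z = (\<lambda>_. 0)" "\<forall>\<rho>. \<tau> \<subseteq> \<rho> \<longrightarrow> z \<rho> = c \<rho>"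
      by blast
    thus "\<exists>z\<in>chains \<Gamma> n. (\<forall>\<sigma>. bdV V z \<sigma> = 0) \<and> (\<forall>\<rho>. \<tau> \<subseteq> \<rho> \<longrightarrow> z \<rho> = c \<rho>)" using e[OF z(1)] by (metis fun_eq_iff)
  next
    assume H: "\<forall>c::'a set \<Rightarrow> 'k. c\<in>chains \<Gamma> n \<and> (\<forall>\<rho>. \<tau> \<subseteq> \<rho> \<longrightarrow> bdV V c \<rho> = 0)
     \<longrightarrow> (\<exists>z\<in>chains \<Gamma> n. (\<forall>\<sigma>. bdV V z \<sigma> = 0) \<and> (\<forall>\<rho>. \<tau> \<subseteq> \<rho> \<longrightarrow> z \<rho> = c \<rho>))"
    show "extp K \<Gamma> \<tau> n" unfolding extp_def
    proof (intro allI impI)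
      fix c :: "'a set \<Rightarrow> 'k" assume c: "c \<in> chains \<Gamma> n \<and> (\<forall>\<rho>. \<tau> \<subseteq> \<rho> \<longrightarrow> bd \<Gamma> c \<rho> = 0)"
      hence "\<forall>\<rho>. \<tau> \<subseteq> \<rho> \<longrightarrow> bdV V c \<rho> = 0" using e[of c n] by auto
      hence "\<exists>z\<in>chains \<Gamma> n. (\<forall>\<sigma>. bdV V z \<sigma> = 0) \<and> (\<forall>\<rho>. \<tau> \<subseteq> \<rho> \<longrightarrow> z \<rho> = c \<rho>)"
        using c by (intro H[rule_format]) auto
      then obtain z where z: "z \<in> chains \<Gamma> n" "\<forall>\<sigma>. bdV V z \<sigma> = 0" "\<forall>\<rho>. \<tau> \<subseteq> \<rho> \<longrightarrow> z \<rho> = c \<rho>"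
        by blast
      thus "\<exists>z\<in>chains \<Gamma> n. bd \<Gamma> z = (\<lambda>_. 0) \<and> (\<forall>\<rho>. \<tau> \<subseteq> \<rho> \<longrightarrow> z \<rho> = c \<rho>)" using e[OF z(1)] z by (intro bexI[of _ z]) (auto simp: fun_eq_iff)
    qed
  qed
qed

lemma card_un_disj: "finite A \<Longrightarrow> finite B \<Longrightarrow> A \<inter> B = {} \<Longrightarrow> card (A \<union> B) = card A + card B"
  by (simp add: card_Un_disjoint)

lemma link_mem: "\<sigma> \<in> link \<Lambda> F \<Longrightarrow> F \<union> \<sigma> \<in> \<Lambda> \<and> F \<inter> \<sigma> = {} \<and> \<sigma> \<in> \<Lambda>"
  unfolding link_def by (auto simp: Un_commute)

lemma CMh_link:
  assumes sc: "simplicial_complex \<Lambda>" and cm: "CMh K \<Lambda> n" and F: "F \<in> \<Lambda>"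
  shows "CMh K (link \<Lambda> F) (n - card F)"
  unfolding CMh_def
proof (intro ballI allI impI)
  fix \<sigma> m assume s: "\<sigma> \<in> link \<Lambda> F" and m: "m + card \<sigma> < n - card F"
  have u: "F \<union> \<sigma> \<in> \<Lambda>" "F \<inter> \<sigma> = {}" "\<sigma> \<in> \<Lambda>" using link_mem[OF s] by auto
  have c: "card (F \<union> \<sigma>) = card F + card \<sigma>"
    using u sc_finite_face[OF sc] F by (simp add: card_Un_disjoint)
  have "hvanish K (link \<Lambda> (F \<union> \<sigma>)) m" using cm u(1) m c unfolding CMh_def by auto
  thus "hvanish K (link (link \<Lambda> F) \<sigma>) m" using link_link[OF sc u(2)] by simp
qed

lemma DC_link:
  assumes sc: "simplicial_complex \<Lambda>" and cm: "DC K \<Lambda> n" and F: "F \<in> \<Lambda>"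
  shows "DC K (link \<Lambda> F) (n - card F)"
proof -
  have "CMh K (link \<Lambda> F) (n - card F)" using CMh_link[OF sc _ F] cm unfolding DC_def by blast
  moreover have "\<forall>\<sigma>\<in>link \<Lambda> F. \<forall>w m. m + card \<sigma> < n - card F \<longrightarrow> hvanish K (delete (link (link \<Lambda> F) \<sigma>) {w}) m"
  proof (intro ballI allI impI)
    fix \<sigma> w m assume s: "\<sigma> \<in> link \<Lambda> F" and m: "m + card \<sigma> < n - card F"
    have u: "F \<union> \<sigma> \<in> \<Lambda>" "F \<inter> \<sigma> = {}" "\<sigma> \<in> \<Lambda>" using link_mem[OF s] by auto
    have c: "card (F \<union> \<sigma>) = card F + card \<sigma>"
      using u sc_finite_face[OF sc] F by (simp add: card_Un_disjoint)
    have "hvanish K (delete (link \<Lambda> (F \<union> \<sigma>)) {w}) m" using cm u(1) m c unfolding DC_def by auto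
    thus "hvanish K (delete (link (link \<Lambda> F) \<sigma>) {w}) m" using link_link[OF sc u(2)] by simp
  qed
  ultimately show ?thesis unfolding DC_def by blast
qed

lemma CMh_delete:
  assumes "DC K \<Lambda> n"
  shows "CMh K (delete \<Lambda> {u}) n"
  unfolding CMh_def
proof (intro ballI allI impI)
  fix \<sigma> m assume s: "\<sigma> \<in> delete \<Lambda> {u}" and m: "m + card \<sigma> < n"
  hence "\<sigma> \<in> \<Lambda>" "u \<notin> \<sigma>" by (auto simp: delete_def)
  thus "hvanish K (link (delete \<Lambda> {u}) \<sigma>) m" using assms m link_delete[of u \<sigma> \<Lambda>]
    unfolding DC_def by auto
qed

lemma dec:
  fixes b :: "'a::linorder set \<Rightarrow> 'k::comm_ring_1"
  assumes fW: "finite W" and one: "\<And>v w. b \<rho> \<noteq> 0 \<Longrightarrow> v \<in> \<rho> \<inter> W \<Longrightarrow> w \<in> \<rho> \<inter> W \<Longrightarrow> v = w"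
  shows "b \<rho> = (if \<rho> \<inter> W = {} then b \<rho> else 0) + (\<Sum>v\<in>W. cone v (restr v b) \<rho>)"
proof -
  have s: "(\<Sum>v\<in>W. cone v (restr v b) \<rho>) = (\<Sum>v\<in>W. if v \<in> \<rho> then b \<rho> else 0)"
    by (simp add: cone_restr)
  show ?thesis
  proof (cases "b \<rho> = 0 \<or> \<rho> \<inter> W = {}")
    case True thus ?thesis unfolding s by (auto intro!: sum.neutral)
  next
    case False
    then obtain x where x: "x \<in> \<rho> \<inter> W" and b: "b \<rho> \<noteq> 0" by auto
    have "(\<Sum>v\<in>W. if v \<in> \<rho> then b \<rho> else 0) = (if x \<in> \<rho> then b \<rho> else 0) + (\<Sum>v\<in>W - {x}. if v \<in> \<rho> then b \<rho> else 0)"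
      using x fW by (subst sum.remove[of _ x]) auto
    also have "(\<Sum>v\<in>W - {x}. if v \<in> \<rho> then b \<rho> else 0) = 0"
      using one[OF b _ x] by (intro sum.neutral) auto
    finally show ?thesis using s x False by auto
  qed
qed




lemma chains_mono: "\<Gamma> \<subseteq> \<Gamma>' \<Longrightarrow> c \<in> chains \<Gamma> m \<Longrightarrow> c \<in> chains \<Gamma>' m"
  unfolding chains_def by blast

lemma vertex_face: "simplicial_complex \<Lambda> \<Longrightarrow> v \<in> \<Union>\<Lambda> \<Longrightarrow> {v} \<in> \<Lambda>"
  by (meson UnionE empty_subsetI insert_subset sc_closed)

lemma V_aux:
  fixes K :: "'k::field itself" and \<Lambda> :: "'a::linorder set set"
  shows "card (C - S) = k \<Longrightarrow> simplicial_complex \<Lambda> \<Longrightarrow> bal \<Lambda> C \<kappa> \<Longrightarrow> finite C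
    \<Longrightarrow> CMh K \<Lambda> (card C) \<Longrightarrow> S \<subseteq> C \<Longrightarrow> m < card S \<Longrightarrow> hvanish K (rank_selected \<Lambda> \<kappa> S) m"
proof (induction k arbitrary: \<Lambda> C S m)
  case 0
  hence "S = C" by auto
  hence "rank_selected \<Lambda> \<kappa> S = \<Lambda>" using rank_all[OF "0.prems"(3)] by simp
  moreover have "{} \<in> \<Lambda>" using sc_empty[OF "0.prems"(2)] .
  ultimately show ?case using "0.prems"(5,7) \<open>S = C\<close> unfolding CMh_def by (auto simp: link_empty)
next
  case (Suc k)
  note sc = Suc.prems(2) and bl = Suc.prems(3) and fC = Suc.prems(4) and cm = Suc.prems(5)
    and SC = Suc.prems(6) and mS = Suc.prems(7)
  obtain i where i: "i \<in> C" "i \<notin> S" using Suc.prems(1) by (metis Diff_eq_empty_iff card_0_eq finite_Diff fC nat.distinct(1) subsetI)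
  have fS: "finite S" using SC fC finite_subset by blast
  define V where "V = \<Union>\<Lambda>"
  have fV: "finite V" unfolding V_def by (rule sc_finV[OF sc])
  define \<Gamma> where "\<Gamma> = rank_selected \<Lambda> \<kappa> S"
  define \<Gamma>1 where "\<Gamma>1 = rank_selected \<Lambda> \<kappa> (insert i S)"
  have sub: "\<Gamma> \<subseteq> \<Gamma>1" unfolding \<Gamma>_def \<Gamma>1_def rank_selected_def by auto
  have VG: "\<Union>\<Gamma> \<subseteq> V" "\<Union>\<Gamma>1 \<subseteq> V" unfolding V_def \<Gamma>_def \<Gamma>1_def rank_selected_def by auto
  have sc1: "simplicial_complex \<Gamma>1" unfolding \<Gamma>1_def by (rule sc_rank[OF sc])
  have IH1: "hvanish K \<Gamma>1 m" unfolding \<Gamma>1_def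
  proof (rule Suc.IH[OF _ sc bl fC cm])
    have "C - insert i S = (C - S) - {i}" by auto
    thus "card (C - insert i S) = k" using Suc.prems(1) i by simp
    show "insert i S \<subseteq> C" using i SC by auto
    show "m < card (insert i S)" using mS fS i by simp
  qed
  define W where "W = {v\<in>V. \<kappa> v = i}"
  have fW: "finite W" unfolding W_def using fV by simp
  have IH2: "hvanish K (rank_selected (link \<Lambda> {v}) \<kappa> S) m" if v: "v \<in> W" for v
  proof (rule Suc.IH)
    have vf: "{v} \<in> \<Lambda>" using vertex_face[OF sc] v unfolding W_def V_def by blast
    have kv: "\<kappa> v = i" using v unfolding W_def by simp
    have "(C - {i}) - S = (C - S) - {i}" by auto
    thus "card ((C - {i}) - S) = k" using Suc.prems(1) i by simp
    show "simplicial_complex (link \<Lambda> {v})" by (rule sc_link[OF sc vf])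
    show "bal (link \<Lambda> {v}) (C - {i}) \<kappa>" using bal_link[OF bl, of "{v}"] kv by simp
    show "finite (C - {i})" using fC by simp
    have "card (C - {i}) = card C - card {v}" using i fC by simp
    thus "CMh K (link \<Lambda> {v}) (card (C - {i}))" using CMh_link[OF sc cm vf] by simp
    show "S \<subseteq> C - {i}" using SC i by auto
    show "m < card S" by (rule mS)
  qed
  show ?case unfolding \<Gamma>_def[symmetric] hvanish_bdV[OF fV VG(1)]
  proof (intro allI impI)
    fix c :: "'a set \<Rightarrow> 'k" assume c: "c \<in> chains \<Gamma> m \<and> (\<forall>\<sigma>. bdV V c \<sigma> = 0)"
    have c1: "c \<in> chains \<Gamma>1 m" using chains_mono[OF sub] c by blast
    obtain b1 where b1: "b1 \<in> chains \<Gamma>1 (Suc m)" "\<forall>\<sigma>. bdV V b1 \<sigma> = c \<sigma>"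
      using IH1[unfolded hvanish_bdV[OF fV VG(2)], rule_format, of c] c c1 by blast
    have fb1: "fs b1" by (rule chains_fs[OF sc1 b1(1)])
    define \<gamma> where "\<gamma> v = restr v b1" for v
    have gch: "\<gamma> v \<in> chains (rank_selected (link \<Lambda> {v}) \<kappa> S) m" if v: "v \<in> W" for v
      unfolding chains_def mem_Collect_eq
    proof (intro allI impI)
      fix \<sigma> assume "\<gamma> v \<sigma> \<noteq> 0"
      hence vs: "v \<notin> \<sigma>" and nz: "b1 (insert v \<sigma>) \<noteq> 0" unfolding \<gamma>_def restr_def by (auto split: if_splits)
      hence m1: "insert v \<sigma> \<in> \<Gamma>1" "card (insert v \<sigma>) = Suc m" using b1(1) unfolding chains_def by auto
      hence inL: "insert v \<sigma> \<in> \<Lambda>" "\<kappa> ` insert v \<sigma> \<subseteq> insert i S" unfolding \<Gamma>1_def rank_selected_def by auto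
      have inj: "inj_on \<kappa> (insert v \<sigma>)" using bl inL(1) unfolding bal_def by blast
      have kv: "\<kappa> v = i" using v unfolding W_def by simp
      have "\<kappa> ` \<sigma> \<subseteq> S"
      proof
        fix x assume "x \<in> \<kappa> ` \<sigma>"
        then obtain y where y: "y \<in> \<sigma>" "x = \<kappa> y" by blast
        have "y \<noteq> v" using vs y by auto
        hence "\<kappa> y \<noteq> i" using inj kv y(1) vs by (metis inj_onD insertCI)
        thus "x \<in> S" using inL(2) y by auto
      qed
      moreover have "\<sigma> \<in> link \<Lambda> {v}" using inL vs sc_closed[OF sc inL(1)] unfolding link_def by auto
      moreover have "card \<sigma> = m" using m1(2) vs sc_finite_face[OF sc inL(1)] by simp
      ultimately show "\<sigma> \<in> rank_selected (link \<Lambda> {v}) \<kappa> S \<and> card \<sigma> = m"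
        unfolding rank_selected_def by simp
    qed
    have gcyc: "bdV V (\<gamma> v) \<sigma> = 0" if v: "v \<in> W" for v \<sigma>
    proof -
      have vV: "v \<in> V" using v unfolding W_def by simp
      have "bdV V (\<gamma> v) \<sigma> = - restr v (bdV V b1) \<sigma>" unfolding \<gamma>_def by (rule bdV_restr[OF fV vV fb1])
      also have "restr v (bdV V b1) \<sigma> = restr v c \<sigma>" using b1(2) by (simp add: restr_def)
      also have "restr v c \<sigma> = 0"
      proof (cases "v \<in> \<sigma>")
        case False
        have "c (insert v \<sigma>) = 0"
        proof (rule ccontr)
          assume "c (insert v \<sigma>) \<noteq> 0"
          hence "insert v \<sigma> \<in> \<Gamma>" using c unfolding chains_def by blast
          hence "\<kappa> v \<in> S" unfolding \<Gamma>_def rank_selected_def by auto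
          thus False using v i unfolding W_def by auto
        qed
        thus ?thesis by (simp add: restr_def)
      qed (simp add: restr_def)
      finally show ?thesis by simp
    qed
    have "\<forall>v\<in>W. \<exists>d. d \<in> chains (rank_selected (link \<Lambda> {v}) \<kappa> S) (Suc m) \<and> (\<forall>\<sigma>. bdV V d \<sigma> = \<gamma> v \<sigma>)"
    proof
      fix v assume v: "v \<in> W"
      have VL: "\<Union>(rank_selected (link \<Lambda> {v}) \<kappa> S) \<subseteq> V" unfolding V_def rank_selected_def link_def by auto
      show "\<exists>d. d \<in> chains (rank_selected (link \<Lambda> {v}) \<kappa> S) (Suc m) \<and> (\<forall>\<sigma>. bdV V d \<sigma> = \<gamma> v \<sigma>)"
        using IH2[OF v, unfolded hvanish_bdV[OF fV VL], rule_format, of "\<gamma> v"] gch[OF v] gcyc[OF v] by blast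
    qed
    then obtain \<delta> where \<delta>: "\<And>v. v \<in> W \<Longrightarrow> \<delta> v \<in> chains (rank_selected (link \<Lambda> {v}) \<kappa> S) (Suc m)"
       "\<And>v \<sigma>. v \<in> W \<Longrightarrow> bdV V (\<delta> v) \<sigma> = \<gamma> v \<sigma>" by metis
    define b0 where "b0 = (\<lambda>\<rho>. if \<rho> \<inter> W = {} then b1 \<rho> else 0)"
    define b where "b = (\<lambda>\<rho>. b0 \<rho> + (\<Sum>v\<in>W. \<delta> v \<rho>))"
    have dec1: "b1 \<rho> = b0 \<rho> + (\<Sum>v\<in>W. cone v (\<gamma> v) \<rho>)" for \<rho>
      unfolding b0_def \<gamma>_def
    proof (rule dec[OF fW])
      fix v w assume nz: "b1 \<rho> \<noteq> 0" and vw: "v \<in> \<rho> \<inter> W" "w \<in> \<rho> \<inter> W"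
      have "\<rho> \<in> \<Gamma>1" using nz b1(1) unfolding chains_def by blast
      hence "inj_on \<kappa> \<rho>" using bl unfolding \<Gamma>1_def rank_selected_def bal_def by blast
      thus "v = w" using vw unfolding W_def by (auto dest: inj_onD)
    qed
    have "b \<in> chains \<Gamma> (Suc m)" unfolding chains_def mem_Collect_eq
    proof (intro allI impI)
      fix \<rho> assume nz: "b \<rho> \<noteq> 0"
      show "\<rho> \<in> \<Gamma> \<and> card \<rho> = Suc m"
      proof (cases "b0 \<rho> = 0")
        case False
        hence r: "\<rho> \<inter> W = {}" "b1 \<rho> \<noteq> 0" unfolding b0_def by (auto split: if_splits)
        hence r1: "\<rho> \<in> \<Gamma>1" "card \<rho> = Suc m" using b1(1) unfolding chains_def by auto
        have "\<kappa> ` \<rho> \<subseteq> S"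
        proof
          fix x assume "x \<in> \<kappa> ` \<rho>"
          then obtain y where y: "y \<in> \<rho>" "x = \<kappa> y" by blast
          have "y \<in> V" using r1(1) y unfolding \<Gamma>1_def V_def rank_selected_def by auto
          hence "\<kappa> y \<noteq> i" using r(1) y unfolding W_def by auto
          thus "x \<in> S" using r1(1) y unfolding \<Gamma>1_def rank_selected_def by auto
        qed
        thus ?thesis using r1 unfolding \<Gamma>1_def \<Gamma>_def rank_selected_def by auto
      next
        case True
        hence "(\<Sum>v\<in>W. \<delta> v \<rho>) \<noteq> 0" using nz unfolding b_def by simp
        then obtain v where v: "v \<in> W" "\<delta> v \<rho> \<noteq> 0" by (meson sum.neutral)
        hence "\<rho> \<in> rank_selected (link \<Lambda> {v}) \<kappa> S" "card \<rho> = Suc m" using \<delta>(1)[OF v(1)] unfolding chains_def by auto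
        thus ?thesis unfolding \<Gamma>_def rank_selected_def link_def by auto
      qed
    qed
    moreover have "\<forall>\<sigma>. bdV V b \<sigma> = c \<sigma>"
    proof
      fix \<sigma>
      have "bdV V b \<sigma> = bdV V b0 \<sigma> + (\<Sum>v\<in>W. bdV V (\<delta> v) \<sigma>)"
        unfolding b_def bdV_add bdV_sum ..
      also have "\<dots> = bdV V b0 \<sigma> + (\<Sum>v\<in>W. \<gamma> v \<sigma>)" using \<delta>(2) by simp
      also have "\<dots> = bdV V b1 \<sigma>"
      proof -
        have "b1 = (\<lambda>\<rho>. b0 \<rho> + (\<Sum>v\<in>W. cone v (\<gamma> v) \<rho>))" using dec1 by auto
        hence "bdV V b1 \<sigma> = bdV V b0 \<sigma> + (\<Sum>v\<in>W. bdV V (cone v (\<gamma> v)) \<sigma>)"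
          by (simp add: bdV_add bdV_sum)
        also have "(\<Sum>v\<in>W. bdV V (cone v (\<gamma> v)) \<sigma>) = (\<Sum>v\<in>W. \<gamma> v \<sigma>)"
        proof (rule sum.cong[OF refl])
          fix v assume v: "v \<in> W"
          have vV: "v \<in> V" using v unfolding W_def by simp
          have "bdV V (cone v (\<gamma> v)) \<sigma> = \<gamma> v \<sigma> - cone v (bdV V (\<gamma> v)) \<sigma>"
            by (rule cone_bdV[OF fV vV]) (auto simp: \<gamma>_def fs_restr[OF fb1] restr_vanish)
          also have "cone v (bdV V (\<gamma> v)) \<sigma> = 0" using gcyc[OF v] by (simp add: cone_def)
          finally show "bdV V (cone v (\<gamma> v)) \<sigma> = \<gamma> v \<sigma>" by simp
        qed
        finally show ?thesis by simp
      qed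
      also have "\<dots> = c \<sigma>" using b1(2) by simp
      finally show "bdV V b \<sigma> = c \<sigma>" .
    qed
    ultimately show "\<exists>b\<in>chains \<Gamma> (Suc m). \<forall>\<sigma>. bdV V b \<sigma> = c \<sigma>" by blast
  qed
qed

lemma V_lemma:
  fixes K :: "'k::field itself" and \<Lambda> :: "'a::linorder set set"
  assumes "simplicial_complex \<Lambda>" "bal \<Lambda> C \<kappa>" "finite C" "CMh K \<Lambda> (card C)" "S \<subseteq> C" "m < card S"
  shows "hvanish K (rank_selected \<Lambda> \<kappa> S) m"
  using V_aux[OF refl assms] .




lemma cone_chain:
  assumes sc: "simplicial_complex \<Gamma>" and z: "\<zeta> \<in> chains (link \<Gamma> {u}) (n - 1)" and n: "n \<ge> 1"
  shows "cone u \<zeta> \<in> chains \<Gamma> n"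
  unfolding chains_def mem_Collect_eq
proof (intro allI impI)
  fix \<rho> assume "cone u \<zeta> \<rho> \<noteq> 0"
  hence u: "u \<in> \<rho>" and nz: "\<zeta> (\<rho> - {u}) \<noteq> 0" unfolding cone_def by (auto split: if_splits)
  hence l: "\<rho> - {u} \<in> link \<Gamma> {u}" "card (\<rho> - {u}) = n - 1" using z unfolding chains_def by auto
  hence "(\<rho> - {u}) \<union> {u} \<in> \<Gamma>" unfolding link_def by auto
  moreover have "(\<rho> - {u}) \<union> {u} = \<rho>" using u by auto
  ultimately have r: "\<rho> \<in> \<Gamma>" by simp
  have "finite \<rho>" using sc_finite_face[OF sc r] .
  hence "card \<rho> = Suc (card (\<rho> - {u}))" using u by (rule card_Suc_Diff1[symmetric])
  thus "\<rho> \<in> \<Gamma> \<and> card \<rho> = n" using r l(2) n by simp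
qed

lemma cone_cycle:
  assumes sc: "simplicial_complex \<Gamma>" and z: "\<zeta> \<in> chains (link \<Gamma> {u}) m"
    and fV: "finite V" and uV: "u \<in> V" and cyc: "\<And>\<sigma>. bdV V \<zeta> \<sigma> = 0"
  shows "bdV V (cone u \<zeta>) \<sigma> = \<zeta> \<sigma>"
proof -
  have sl: "simplicial_complex (link \<Gamma> {u}) \<or> True" by simp
  have fz: "fs \<zeta>" unfolding fs_def
  proof (intro allI impI)
    fix \<sigma> assume "\<zeta> \<sigma> \<noteq> 0"
    hence "\<sigma> \<in> \<Gamma>" using z unfolding chains_def link_def by auto
    thus "finite \<sigma>" using sc_finite_face[OF sc] by blast
  qed
  have zu: "\<zeta> \<sigma> = 0" if "u \<in> \<sigma>" for \<sigma>
    using z that unfolding chains_def link_def by blast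
  have "bdV V (cone u \<zeta>) \<sigma> = \<zeta> \<sigma> - cone u (bdV V \<zeta>) \<sigma>"
    by (rule cone_bdV[OF fV uV fz zu])
  thus ?thesis using cyc by (simp add: cone_def)
qed

lemma restr_chain:
  assumes sc: "simplicial_complex \<Gamma>" and c: "c \<in> chains \<Gamma> n"
  shows "restr u c \<in> chains (link \<Gamma> {u}) (n - 1)"
  unfolding chains_def mem_Collect_eq
proof (intro allI impI)
  fix \<sigma> assume "restr u c \<sigma> \<noteq> 0"
  hence us: "u \<notin> \<sigma>" and nz: "c (insert u \<sigma>) \<noteq> 0" unfolding restr_def by (auto split: if_splits)
  hence m: "insert u \<sigma> \<in> \<Gamma>" "card (insert u \<sigma>) = n" using c unfolding chains_def by auto
  have "\<sigma> \<in> \<Gamma>" using sc_closed[OF sc m(1)] by blast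
  hence "\<sigma> \<in> link \<Gamma> {u}" using m us unfolding link_def by auto
  moreover have "card \<sigma> = n - 1" using m us sc_finite_face[OF sc m(1)] by simp
  ultimately show "\<sigma> \<in> link \<Gamma> {u} \<and> card \<sigma> = n - 1" by simp
qed

lemma reduce:
  fixes K :: "'k::field itself" and \<Gamma> :: "'a::linorder set set"
  assumes sc: "simplicial_complex \<Gamma>" and u\<tau>: "u \<in> \<tau>" and \<tau>\<Gamma>: "\<tau> \<in> \<Gamma>"
    and A: "extp K (link \<Gamma> {u}) (\<tau> - {u}) (n - 1)"
    and B: "\<forall>\<zeta>::'a set \<Rightarrow> 'k. \<zeta> \<in> chains (link \<Gamma> {u}) (n - 1) \<and> (\<forall>\<sigma>. bdV (\<Union>\<Gamma>) \<zeta> \<sigma> = 0)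
        \<longrightarrow> (\<exists>z\<in>chains \<Gamma> n. (\<forall>\<sigma>. bdV (\<Union>\<Gamma>) z \<sigma> = 0) \<and> (\<forall>\<rho>. u \<in> \<rho> \<longrightarrow> z \<rho> = cone u \<zeta> \<rho>))"
  shows "extp K \<Gamma> \<tau> n"
proof -
  define V where "V = \<Union>\<Gamma>"
  have fV: "finite V" unfolding V_def by (rule sc_finV[OF sc])
  have uV: "u \<in> V" using u\<tau> \<tau>\<Gamma> unfolding V_def by blast
  have VL: "\<Union>(link \<Gamma> {u}) \<subseteq> V" unfolding V_def link_def by auto
  have VG: "\<Union>\<Gamma> \<subseteq> V" unfolding V_def by simp
  show ?thesis unfolding extp_bdV[OF fV VG]
  proof (intro allI impI)
    fix c :: "'a set \<Rightarrow> 'k" assume c: "c \<in> chains \<Gamma> n \<and> (\<forall>\<rho>. \<tau> \<subseteq> \<rho> \<longrightarrow> bdV V c \<rho> = 0)"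
    define \<beta> where "\<beta> = restr u c"
    have bch: "\<beta> \<in> chains (link \<Gamma> {u}) (n - 1)" unfolding \<beta>_def using restr_chain[OF sc] c by blast
    have fc: "fs c" using chains_fs[OF sc] c by blast
    have brel: "bdV V \<beta> \<rho> = 0" if "\<tau> - {u} \<subseteq> \<rho>" for \<rho>
    proof -
      have "bdV V \<beta> \<rho> = - restr u (bdV V c) \<rho>" unfolding \<beta>_def by (rule bdV_restr[OF fV uV fc])
      also have "restr u (bdV V c) \<rho> = 0"
      proof (cases "u \<in> \<rho>")
        case False
        have "\<tau> \<subseteq> insert u \<rho>" using that by auto
        hence "bdV V c (insert u \<rho>) = 0" using c by blast
        thus ?thesis by (simp add: restr_def)
      qed (simp add: restr_def)
      finally show ?thesis by simp
    qed
    obtain \<zeta> where \<zeta>: "\<zeta> \<in> chains (link \<Gamma> {u}) (n - 1)" "\<forall>\<sigma>. bdV V \<zeta> \<sigma> = 0"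
      "\<forall>\<rho>. \<tau> - {u} \<subseteq> \<rho> \<longrightarrow> \<zeta> \<rho> = \<beta> \<rho>"
      using A[unfolded extp_bdV[OF fV VL], rule_format, of \<beta>] bch brel by blast
    obtain z where z: "z \<in> chains \<Gamma> n" "\<forall>\<sigma>. bdV V z \<sigma> = 0" "\<forall>\<rho>. u \<in> \<rho> \<longrightarrow> z \<rho> = cone u \<zeta> \<rho>"
      using B[rule_format, of \<zeta>] \<zeta>(1,2) unfolding V_def by blast
    have "\<forall>\<rho>. \<tau> \<subseteq> \<rho> \<longrightarrow> z \<rho> = c \<rho>"
    proof (intro allI impI)
      fix \<rho> assume r: "\<tau> \<subseteq> \<rho>"
      hence ur: "u \<in> \<rho>" using u\<tau> by auto
      have "z \<rho> = cone u \<zeta> \<rho>" using z(3) ur by simp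
      also have "\<dots> = cone u \<beta> \<rho>"
      proof -
        have "\<tau> - {u} \<subseteq> \<rho> - {u}" using r by auto
        hence "\<zeta> (\<rho> - {u}) = \<beta> (\<rho> - {u})" using \<zeta>(3) by blast
        thus ?thesis unfolding cone_def by simp
      qed
      also have "\<dots> = c \<rho>" unfolding \<beta>_def cone_restr using ur by simp
      finally show "z \<rho> = c \<rho>" .
    qed
    thus "\<exists>z\<in>chains \<Gamma> n. (\<forall>\<sigma>. bdV V z \<sigma> = 0) \<and> (\<forall>\<rho>. \<tau> \<subseteq> \<rho> \<longrightarrow> z \<rho> = c \<rho>)" using z by blast
  qed
qed

lemma extp_empty: "extp K \<Gamma> {} n"
  unfolding extp_def by (auto simp: fun_eq_iff)


lemma chains_diff:
  fixes c d :: "'a set \<Rightarrow> 'k::ab_group_add"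
  assumes "c \<in> chains \<Gamma> m" "d \<in> chains \<Gamma> m"
  shows "(\<lambda>\<rho>. c \<rho> - d \<rho>) \<in> chains \<Gamma> m"
  unfolding chains_def mem_Collect_eq
proof (intro allI impI)
  fix \<rho> assume "c \<rho> - d \<rho> \<noteq> 0"
  hence "c \<rho> \<noteq> 0 \<or> d \<rho> \<noteq> 0" by auto
  thus "\<rho> \<in> \<Gamma> \<and> card \<rho> = m" using assms unfolding chains_def by blast
qed

lemma chains_sum:
  fixes f :: "'i \<Rightarrow> 'a set \<Rightarrow> 'k::comm_monoid_add"
  assumes "\<And>i. i \<in> I \<Longrightarrow> f i \<in> chains \<Gamma> m"
  shows "(\<lambda>\<rho>. \<Sum>i\<in>I. f i \<rho>) \<in> chains \<Gamma> m"
  unfolding chains_def mem_Collect_eq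
proof (intro allI impI)
  fix \<rho> assume "(\<Sum>i\<in>I. f i \<rho>) \<noteq> 0"
  then obtain i where "i \<in> I" "f i \<rho> \<noteq> 0" by (meson sum.neutral)
  thus "\<rho> \<in> \<Gamma> \<and> card \<rho> = m" using assms unfolding chains_def by blast
qed

lemma link_rank_colors:
  assumes bl: "bal \<Lambda> C \<kappa>" and ku: "\<kappa> u \<in> S"
  shows "link (rank_selected \<Lambda> \<kappa> S) {u} = rank_selected (link \<Lambda> {u}) \<kappa> (S - {\<kappa> u})"
proof -
  have "link (rank_selected \<Lambda> \<kappa> S) {u} = rank_selected (link \<Lambda> {u}) \<kappa> S"
    using link_rank[of \<kappa> "{u}" S \<Lambda>] ku by simp
  also have "\<dots> = rank_selected (link \<Lambda> {u}) \<kappa> (S - \<kappa> ` {u})" by (rule rank_link_colors[OF bl])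
  finally show ?thesis by simp
qed

lemma G_aux:
  fixes K :: "'k::field itself" and \<Lambda> :: "'a::linorder set set"
  shows "card \<tau> = k \<Longrightarrow> simplicial_complex \<Lambda> \<Longrightarrow> bal \<Lambda> C \<kappa> \<Longrightarrow> finite C \<Longrightarrow> DC K \<Lambda> (card C)
    \<Longrightarrow> S \<subseteq> C \<Longrightarrow> \<tau> \<in> rank_selected \<Lambda> \<kappa> S \<Longrightarrow> extp K (rank_selected \<Lambda> \<kappa> S) \<tau> (card S)"
proof (induction k arbitrary: \<Lambda> C S \<tau>)
  case 0
  have "\<tau> \<in> \<Lambda>" using "0.prems"(7) unfolding rank_selected_def by blast
  hence "finite \<tau>" using sc_finite_face[OF "0.prems"(2)] by blast
  hence "\<tau> = {}" using "0.prems"(1) by simp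
  thus ?case by (simp add: extp_empty)
next
  case (Suc k)
  note sc = Suc.prems(2) and bl = Suc.prems(3) and fC = Suc.prems(4) and dc = Suc.prems(5)
    and SC = Suc.prems(6) and \<tau>R = Suc.prems(7)
  have \<tau>L: "\<tau> \<in> \<Lambda>" "\<kappa> ` \<tau> \<subseteq> S" using \<tau>R unfolding rank_selected_def by auto
  have f\<tau>: "finite \<tau>" using sc_finite_face[OF sc \<tau>L(1)] .
  obtain u where u: "u \<in> \<tau>" using Suc.prems(1) by (metis card.empty ex_in_conv nat.distinct(1))
  have ku: "\<kappa> u \<in> S" using \<tau>L u by auto
  have fS: "finite S" using SC fC finite_subset by blast
  have cS: "card S \<ge> 1" using ku fS by (metis One_nat_def Suc_leI card_gt_0_iff empty_iff)
  define \<Gamma> where "\<Gamma> = rank_selected \<Lambda> \<kappa> S"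
  have sc\<Gamma>: "simplicial_complex \<Gamma>" unfolding \<Gamma>_def by (rule sc_rank[OF sc])
  have uf: "{u} \<in> \<Lambda>" using sc_closed[OF sc \<tau>L(1)] u by blast
  show ?case unfolding \<Gamma>_def[symmetric]
  proof (rule reduce[OF sc\<Gamma> u])
    show "\<tau> \<in> \<Gamma>" unfolding \<Gamma>_def by (rule \<tau>R)
    have lk: "link \<Gamma> {u} = rank_selected (link \<Lambda> {u}) \<kappa> (S - {\<kappa> u})"
      unfolding \<Gamma>_def by (rule link_rank_colors[OF bl ku])
    have cS1: "card S - 1 = card (S - {\<kappa> u})" using ku fS by simp
    show "extp K (link \<Gamma> {u}) (\<tau> - {u}) (card S - 1)" unfolding lk cS1
    proof (rule Suc.IH)
      show "card (\<tau> - {u}) = k" using Suc.prems(1) u f\<tau> by simp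
      show "simplicial_complex (link \<Lambda> {u})" by (rule sc_link[OF sc uf])
      show "bal (link \<Lambda> {u}) (C - {\<kappa> u}) \<kappa>" using bal_link[OF bl, of "{u}"] by simp
      show "finite (C - {\<kappa> u})" using fC by simp
      have "card (C - {\<kappa> u}) = card C - card {u}" using ku SC fC by auto
      thus "DC K (link \<Lambda> {u}) (card (C - {\<kappa> u}))" using DC_link[OF sc dc uf] by simp
      show "S - {\<kappa> u} \<subseteq> C - {\<kappa> u}" using SC by auto
      have inj: "inj_on \<kappa> \<tau>" using bl \<tau>L(1) unfolding bal_def by blast
      have "\<tau> - {u} \<in> link \<Lambda> {u}" using \<tau>L(1) sc_closed[OF sc \<tau>L(1)] u unfolding link_def
        by (auto simp: insert_absorb)
      moreover have "\<kappa> ` (\<tau> - {u}) \<subseteq> S - {\<kappa> u}" using inj u \<tau>L(2) by (auto dest: inj_onD)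
      ultimately show "\<tau> - {u} \<in> rank_selected (link \<Lambda> {u}) \<kappa> (S - {\<kappa> u})"
        unfolding rank_selected_def by simp
    qed
    show "\<forall>\<zeta>::'a set \<Rightarrow> 'k. \<zeta> \<in> chains (link \<Gamma> {u}) (card S - 1) \<and> (\<forall>\<sigma>. bdV (\<Union>\<Gamma>) \<zeta> \<sigma> = 0)
        \<longrightarrow> (\<exists>z\<in>chains \<Gamma> (card S). (\<forall>\<sigma>. bdV (\<Union>\<Gamma>) z \<sigma> = 0) \<and> (\<forall>\<rho>. u \<in> \<rho> \<longrightarrow> z \<rho> = cone u \<zeta> \<rho>))"
    proof (intro allI impI)
      fix \<zeta> :: "'a set \<Rightarrow> 'k"
      assume z: "\<zeta> \<in> chains (link \<Gamma> {u}) (card S - 1) \<and> (\<forall>\<sigma>. bdV (\<Union>\<Gamma>) \<zeta> \<sigma> = 0)"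
      define V where "V = \<Union>\<Gamma>"
      have fV: "finite V" unfolding V_def by (rule sc_finV[OF sc\<Gamma>])
      have uV: "u \<in> V" unfolding V_def \<Gamma>_def rank_selected_def using \<tau>L u by blast
      define \<Gamma>u where "\<Gamma>u = rank_selected (delete \<Lambda> {u}) \<kappa> S"
      have Gsub: "\<Gamma>u \<subseteq> \<Gamma>" unfolding \<Gamma>u_def \<Gamma>_def rank_selected_def delete_def by auto
      have VGu: "\<Union>\<Gamma>u \<subseteq> V" using Gsub unfolding V_def by auto
      have zu: "\<zeta> \<in> chains \<Gamma>u (card S - 1)"
        using z unfolding chains_def link_def \<Gamma>u_def \<Gamma>_def rank_selected_def delete_def by auto
      have hv: "hvanish K \<Gamma>u (card S - 1)" unfolding \<Gamma>u_def
      proof (rule V_lemma[OF sc_delete[OF sc] _ fC CMh_delete[OF dc] SC])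
        show "bal (delete \<Lambda> {u}) C \<kappa>" using bal_mono[OF bl] unfolding delete_def by auto
        show "card S - 1 < card S" using cS by simp
      qed
      obtain w where w: "w \<in> chains \<Gamma>u (card S)" "\<forall>\<sigma>. bdV V w \<sigma> = \<zeta> \<sigma>"
        using hv[unfolded hvanish_bdV[OF fV VGu], rule_format, of \<zeta>] zu z cS
        unfolding V_def by auto
      define zz where "zz = (\<lambda>\<rho>. cone u \<zeta> \<rho> - w \<rho>)"
      have "zz \<in> chains \<Gamma> (card S)" unfolding zz_def
        by (rule chains_diff[OF cone_chain[OF sc\<Gamma> _ cS] chains_mono[OF Gsub w(1)]]) (use z in blast)
      moreover have "\<forall>\<sigma>. bdV V zz \<sigma> = 0"
      proof
        fix \<sigma>
        have "bdV V zz \<sigma> = bdV V (cone u \<zeta>) \<sigma> - bdV V w \<sigma>" unfolding zz_def by (rule bdV_diff)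
        also have "bdV V (cone u \<zeta>) \<sigma> = \<zeta> \<sigma>"
          by (rule cone_cycle[OF sc\<Gamma> _ fV uV]) (use z in \<open>auto simp: V_def\<close>)
        finally show "bdV V zz \<sigma> = 0" using w(2) by simp
      qed
      moreover have "\<forall>\<rho>. u \<in> \<rho> \<longrightarrow> zz \<rho> = cone u \<zeta> \<rho>"
      proof (intro allI impI)
        fix \<rho> assume "u \<in> \<rho>"
        hence "w \<rho> = 0" using w(1) unfolding chains_def \<Gamma>u_def rank_selected_def delete_def by auto
        thus "zz \<rho> = cone u \<zeta> \<rho>" unfolding zz_def by simp
      qed
      ultimately show "\<exists>z\<in>chains \<Gamma> (card S). (\<forall>\<sigma>. bdV (\<Union>\<Gamma>) z \<sigma> = 0) \<and> (\<forall>\<rho>. u \<in> \<rho> \<longrightarrow> z \<rho> = cone u \<zeta> \<rho>)"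
        unfolding V_def by blast
    qed
  qed
qed

lemma G_lemma:
  fixes K :: "'k::field itself" and \<Lambda> :: "'a::linorder set set"
  assumes "simplicial_complex \<Lambda>" "bal \<Lambda> C \<kappa>" "finite C" "DC K \<Lambda> (card C)"
    "S \<subseteq> C" "\<tau> \<in> rank_selected \<Lambda> \<kappa> S"
  shows "extp K (rank_selected \<Lambda> \<kappa> S) \<tau> (card S)"
  using G_aux[OF refl assms] .




lemma bdV_indep:
  assumes "finite V1" "finite V2" "\<Union>\<Gamma> \<subseteq> V1" "\<Union>\<Gamma> \<subseteq> V2" "supp \<Gamma> c"
  shows "bdV V1 c = bdV V2 c"
  using bd_eq[OF assms(1,3,5)] bd_eq[OF assms(2,4,5)] by simp

lemma MS:
  fixes K :: "'k::field itself" and \<Delta> :: "'a::linorder set set"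
    and \<zeta> :: "'a set \<Rightarrow> 'k"
  assumes sc: "simplicial_complex \<Delta>" and bl: "bal \<Delta> C \<kappa>" and fC: "finite C"
    and DCv: "\<And>v. {v} \<in> \<Delta> \<Longrightarrow> DC K (link \<Delta> {v}) (card C - 1)"
    and SC: "S \<subseteq> C" and iC: "i \<in> C" and iS: "i \<notin> S" and uD: "u \<in> \<Union>\<Delta>" and ku: "\<kappa> u \<in> S"
    and \<zeta>: "\<zeta> \<in> chains (link (rank_selected \<Delta> \<kappa> S) {u}) (card S - 1)"
    and cyc: "\<forall>\<sigma>. bdV (\<Union>\<Delta>) \<zeta> \<sigma> = 0"
  shows "\<exists>z\<in>chains (rank_selected \<Delta> \<kappa> S) (card S). (\<forall>\<sigma>. bdV (\<Union>\<Delta>) z \<sigma> = 0) \<and> (\<forall>\<rho>. u \<in> \<rho> \<longrightarrow> z \<rho> = cone u \<zeta> \<rho>)"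
proof -
  define W where "W = \<Union>\<Delta>"
  have fW: "finite W" unfolding W_def by (rule sc_finV[OF sc])
  have uW: "u \<in> W" using uD unfolding W_def .
  have uf: "{u} \<in> \<Delta>" using vertex_face[OF sc uD] .
  have fS: "finite S" using SC fC finite_subset by blast
  have cS: "card S \<ge> 1" using ku fS by (metis One_nat_def Suc_leI card_gt_0_iff empty_iff)
  define n where "n = card S"
  define \<Lambda> where "\<Lambda> = link \<Delta> {u}"
  define C' where "C' = C - {\<kappa> u}"
  define S1 where "S1 = insert i (S - {\<kappa> u})"
  have kuC: "\<kappa> u \<in> C" using ku SC by auto
  have scL: "simplicial_complex \<Lambda>" unfolding \<Lambda>_def by (rule sc_link[OF sc uf])
  have blL: "bal \<Lambda> C' \<kappa>" unfolding \<Lambda>_def C'_def using bal_link[OF bl, of "{u}"] by simp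
  have cC': "card C' = card C - 1" unfolding C'_def using kuC fC by simp
  have dcL: "DC K \<Lambda> (card C')" unfolding \<Lambda>_def cC' by (rule DCv[OF uf])
  have S1C: "S1 \<subseteq> C'" unfolding S1_def C'_def using SC iC iS ku by auto
  have cS1: "card S1 = n" unfolding S1_def n_def using fS iS ku cS by (simp add: card_Diff_singleton)
  define \<Lambda>1 where "\<Lambda>1 = rank_selected \<Lambda> \<kappa> S1"
  have sc1: "simplicial_complex \<Lambda>1" unfolding \<Lambda>1_def by (rule sc_rank[OF scL])
  have VL1: "\<Union>\<Lambda>1 \<subseteq> W" unfolding W_def \<Lambda>1_def \<Lambda>_def rank_selected_def link_def by auto
  have lkG: "link (rank_selected \<Delta> \<kappa> S) {u} = rank_selected \<Lambda> \<kappa> (S - {\<kappa> u})"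
    unfolding \<Lambda>_def by (rule link_rank_colors[OF bl ku])
  have \<zeta>': "\<zeta> \<in> chains (rank_selected \<Lambda> \<kappa> (S - {\<kappa> u})) (n - 1)" using \<zeta> lkG n_def by simp
  have "rank_selected \<Lambda> \<kappa> (S - {\<kappa> u}) \<subseteq> \<Lambda>1" unfolding \<Lambda>1_def S1_def rank_selected_def by auto
  hence \<zeta>1: "\<zeta> \<in> chains \<Lambda>1 (n - 1)" using chains_mono \<zeta>' by blast
  have hv: "hvanish K \<Lambda>1 (n - 1)" unfolding \<Lambda>1_def
    by (rule V_lemma[OF scL blL _ _ S1C]) (use fC dcL cS1 cS n_def in \<open>auto simp: C'_def DC_def\<close>)
  obtain b where b: "b \<in> chains \<Lambda>1 (Suc (n - 1))" "\<forall>\<sigma>. bdV W b \<sigma> = \<zeta> \<sigma>"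
    using hv[unfolded hvanish_bdV[OF fW VL1], rule_format, of \<zeta>] \<zeta>1 cyc unfolding W_def by blast
  have b1: "b \<in> chains \<Lambda>1 n" using b(1) cS unfolding n_def by simp
  have fb: "fs b" by (rule chains_fs[OF sc1 b1])
  define X where "X = {v\<in>\<Union>\<Lambda>. \<kappa> v = i}"
  have fX: "finite X" unfolding X_def using sc_finV[OF scL] by (rule rev_finite_subset) auto
  have XW: "X \<subseteq> W" unfolding X_def W_def \<Lambda>_def link_def by auto
  define \<gamma> where "\<gamma> v = restr v b" for v
  have bdec: "b \<rho> = (\<Sum>v\<in>X. cone v (\<gamma> v) \<rho>)" for \<rho>
  proof -
    have d: "b \<rho> = (if \<rho> \<inter> X = {} then b \<rho> else 0) + (\<Sum>v\<in>X. cone v (restr v b) \<rho>)"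
    proof (rule dec[OF fX])
      fix v w assume nz: "b \<rho> \<noteq> 0" and vw: "v \<in> \<rho> \<inter> X" "w \<in> \<rho> \<inter> X"
      have "\<rho> \<in> \<Lambda>1" using nz b1 unfolding chains_def by blast
      hence "inj_on \<kappa> \<rho>" using blL unfolding \<Lambda>1_def rank_selected_def bal_def by blast
      thus "v = w" using vw unfolding X_def by (auto dest: inj_onD)
    qed
    have "(if \<rho> \<inter> X = {} then b \<rho> else 0) = 0"
    proof (cases "b \<rho> = 0")
      case False
      hence r: "\<rho> \<in> \<Lambda>1" "card \<rho> = n" using b1 unfolding chains_def by auto
      hence rL: "\<rho> \<in> \<Lambda>" "\<kappa> ` \<rho> \<subseteq> S1" unfolding \<Lambda>1_def rank_selected_def by auto
      have "card (\<kappa> ` \<rho>) = n" using card_colors[OF blL rL(1)] r(2) by simp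
      hence "\<kappa> ` \<rho> = S1" using rL(2) cS1 fS unfolding S1_def by (metis card_subset_eq finite_Diff finite_insert)
      hence "i \<in> \<kappa> ` \<rho>" unfolding S1_def by auto
      then obtain x where "x \<in> \<rho>" "\<kappa> x = i" by auto
      hence "x \<in> \<rho> \<inter> X" using rL(1) unfolding X_def by auto
      thus ?thesis by auto
    qed simp
    thus ?thesis using d unfolding \<gamma>_def by simp
  qed
  have gcyc: "bdV W (\<gamma> v) \<sigma> = 0" if v: "v \<in> X" for v \<sigma>
  proof -
    have vW: "v \<in> W" using v XW by auto
    have "bdV W (\<gamma> v) \<sigma> = - restr v (bdV W b) \<sigma>" unfolding \<gamma>_def by (rule bdV_restr[OF fW vW fb])
    also have "restr v (bdV W b) \<sigma> = restr v \<zeta> \<sigma>" using b(2) by (simp add: restr_def)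
    also have "restr v \<zeta> \<sigma> = 0"
    proof (cases "v \<in> \<sigma>")
      case False
      have "\<zeta> (insert v \<sigma>) = 0"
      proof (rule ccontr)
        assume "\<zeta> (insert v \<sigma>) \<noteq> 0"
        hence "insert v \<sigma> \<in> rank_selected \<Lambda> \<kappa> (S - {\<kappa> u})" using \<zeta> unfolding lkG chains_def by blast
        hence "\<kappa> v \<in> S" unfolding rank_selected_def by auto
        thus False using v iS unfolding X_def by auto
      qed
      thus ?thesis by (simp add: restr_def)
    qed (simp add: restr_def)
    finally show ?thesis by simp
  qed
  have \<zeta>sum: "\<zeta> \<sigma> = (\<Sum>v\<in>X. \<gamma> v \<sigma>)" for \<sigma>
  proof -
    have "b = (\<lambda>\<rho>. \<Sum>v\<in>X. cone v (\<gamma> v) \<rho>)" using bdec by auto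
    hence "bdV W b \<sigma> = (\<Sum>v\<in>X. bdV W (cone v (\<gamma> v)) \<sigma>)" by (simp add: bdV_sum)
    also have "\<dots> = (\<Sum>v\<in>X. \<gamma> v \<sigma>)"
    proof (rule sum.cong[OF refl])
      fix v assume v: "v \<in> X"
      have vW: "v \<in> W" using v XW by auto
      have "bdV W (cone v (\<gamma> v)) \<sigma> = \<gamma> v \<sigma> - cone v (bdV W (\<gamma> v)) \<sigma>"
        by (rule cone_bdV[OF fW vW]) (auto simp: \<gamma>_def fs_restr[OF fb] restr_vanish)
      also have "cone v (bdV W (\<gamma> v)) \<sigma> = 0" using gcyc[OF v] by (simp add: cone_def)
      finally show "bdV W (cone v (\<gamma> v)) \<sigma> = \<gamma> v \<sigma>" by simp
    qed
    finally show ?thesis using b(2) by simp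
  qed
  have Zex: "\<exists>Z\<in>chains (rank_selected (link \<Delta> {v}) \<kappa> S) n. (\<forall>\<sigma>. bdV W Z \<sigma> = 0) \<and> (\<forall>\<rho>. {u} \<subseteq> \<rho> \<longrightarrow> Z \<rho> = cone u (\<gamma> v) \<rho>)"
    if v: "v \<in> X" for v
  proof -
    define \<Gamma>v where "\<Gamma>v = rank_selected (link \<Delta> {v}) \<kappa> S"
    have vD: "v \<in> \<Union>\<Delta>" using v XW unfolding W_def by auto
    have vf: "{v} \<in> \<Delta>" using vertex_face[OF sc vD] .
    have kv: "\<kappa> v = i" using v unfolding X_def by simp
    obtain \<sigma>0 where s0: "\<sigma>0 \<in> \<Lambda>" "v \<in> \<sigma>0" using v unfolding X_def by auto
    have uv: "u \<noteq> v" and uvD: "{u, v} \<in> \<Delta>"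
    proof -
      have "\<sigma>0 \<inter> {u} = {}" "\<sigma>0 \<union> {u} \<in> \<Delta>" using s0(1) unfolding \<Lambda>_def link_def by auto
      thus "u \<noteq> v" using s0(2) by auto
      show "{u, v} \<in> \<Delta>" using sc_closed[OF sc \<open>\<sigma>0 \<union> {u} \<in> \<Delta>\<close>] s0(2) by auto
    qed
    have scv: "simplicial_complex \<Gamma>v" unfolding \<Gamma>v_def by (rule sc_rank[OF sc_link[OF sc vf]])
    have VGv: "\<Union>\<Gamma>v \<subseteq> W" unfolding \<Gamma>v_def W_def rank_selected_def link_def by auto
    have gch: "\<gamma> v \<in> chains (link \<Gamma>v {u}) (n - 1)"
      unfolding chains_def mem_Collect_eq
    proof (intro allI impI)
      fix \<sigma> assume nz: "\<gamma> v \<sigma> \<noteq> 0"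
      have r: "\<sigma> \<in> link \<Lambda>1 {v}" "card \<sigma> = n - 1"
        using nz restr_chain[OF sc1 b1, of v] unfolding \<gamma>_def chains_def by auto
      hence r2: "\<sigma> \<union> {v} \<in> \<Lambda>1" "v \<notin> \<sigma>" "\<sigma> \<in> \<Lambda>1" unfolding link_def by auto
      hence r3: "\<sigma> \<union> {v} \<union> {u} \<in> \<Delta>" "u \<notin> \<sigma> \<union> {v}" "\<kappa> ` (\<sigma> \<union> {v}) \<subseteq> S1"
        unfolding \<Lambda>1_def \<Lambda>_def rank_selected_def link_def by auto
      have inj: "inj_on \<kappa> (\<sigma> \<union> {v})" using bl sc_closed[OF sc r3(1)] unfolding bal_def by blast
      have ks: "\<kappa> ` \<sigma> \<subseteq> S"
      proof
        fix x assume "x \<in> \<kappa> ` \<sigma>"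
        then obtain y where y: "y \<in> \<sigma>" "x = \<kappa> y" by blast
        have "\<kappa> y \<noteq> i" using inj kv y(1) r2(2) by (metis UnCI inj_onD singletonI)
        thus "x \<in> S" using r3(3) y unfolding S1_def by auto
      qed
      have A: "\<sigma> \<in> link \<Delta> {v}" using r3 r2(2) sc_closed[OF sc r3(1)] unfolding link_def
        by (auto simp: Un_commute insert_commute)
      have B: "\<sigma> \<union> {u} \<in> link \<Delta> {v}" using r3 r2(2) uv sc_closed[OF sc r3(1)] unfolding link_def
        by (auto simp: Un_commute insert_commute)
      have G1: "\<sigma> \<in> \<Gamma>v" unfolding \<Gamma>v_def rank_selected_def using A ks by simp
      have G2: "\<sigma> \<union> {u} \<in> \<Gamma>v" unfolding \<Gamma>v_def rank_selected_def using B ks ku by auto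
      have "\<sigma> \<in> link \<Gamma>v {u}" unfolding link_def using G1 G2 r3(2) by auto
      thus "\<sigma> \<in> link \<Gamma>v {u} \<and> card \<sigma> = n - 1" using r(2) by simp
    qed
    have ext: "extp K \<Gamma>v {u} n" unfolding \<Gamma>v_def n_def
    proof (rule G_lemma[OF sc_link[OF sc vf]])
      show "bal (link \<Delta> {v}) (C - {i}) \<kappa>" using bal_link[OF bl, of "{v}"] kv by simp
      show "finite (C - {i})" using fC by simp
      have "card (C - {i}) = card C - 1" using iC fC by simp
      thus "DC K (link \<Delta> {v}) (card (C - {i}))" using DCv[OF vf] by simp
      show "S \<subseteq> C - {i}" using SC iS by auto
      show "{u} \<in> rank_selected (link \<Delta> {v}) \<kappa> S"
        using uvD uv ku uf unfolding rank_selected_def link_def by (auto simp: insert_commute)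
    qed
    have crel: "\<forall>\<rho>. {u} \<subseteq> \<rho> \<longrightarrow> bdV W (cone u (\<gamma> v)) \<rho> = 0"
    proof (intro allI impI)
      fix \<rho> assume "{u} \<subseteq> \<rho>"
      hence ur: "u \<in> \<rho>" by simp
      have "bdV W (cone u (\<gamma> v)) \<rho> = \<gamma> v \<rho>"
        by (rule cone_cycle[OF scv gch fW uW]) (rule gcyc[OF v])
      also have "\<gamma> v \<rho> = 0" using gch ur unfolding chains_def link_def by blast
      finally show "bdV W (cone u (\<gamma> v)) \<rho> = 0" .
    qed
    have cch: "cone u (\<gamma> v) \<in> chains \<Gamma>v n" by (rule cone_chain[OF scv gch cS[folded n_def]])
    show ?thesis unfolding \<Gamma>v_def[symmetric]
      using ext[unfolded extp_bdV[OF fW VGv], rule_format, of "cone u (\<gamma> v)"] cch crel by blast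
  qed
  then obtain Z where Z: "\<And>v. v \<in> X \<Longrightarrow> Z v \<in> chains (rank_selected (link \<Delta> {v}) \<kappa> S) n"
    "\<And>v \<sigma>. v \<in> X \<Longrightarrow> bdV W (Z v) \<sigma> = 0"
    "\<And>v \<rho>. v \<in> X \<Longrightarrow> u \<in> \<rho> \<Longrightarrow> Z v \<rho> = cone u (\<gamma> v) \<rho>" by (metis empty_subsetI insert_subset)
  define z where "z = (\<lambda>\<rho>. \<Sum>v\<in>X. Z v \<rho>)"
  have "z \<in> chains (rank_selected \<Delta> \<kappa> S) n" unfolding z_def
  proof (rule chains_sum)
    fix v assume v: "v \<in> X"
    have "rank_selected (link \<Delta> {v}) \<kappa> S \<subseteq> rank_selected \<Delta> \<kappa> S"
      unfolding rank_selected_def link_def by auto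
    thus "Z v \<in> chains (rank_selected \<Delta> \<kappa> S) n" using chains_mono Z(1)[OF v] by blast
  qed
  moreover have "\<forall>\<sigma>. bdV (\<Union>\<Delta>) z \<sigma> = 0"
    unfolding W_def[symmetric] z_def bdV_sum using Z(2) by simp
  moreover have "\<forall>\<rho>. u \<in> \<rho> \<longrightarrow> z \<rho> = cone u \<zeta> \<rho>"
  proof (intro allI impI)
    fix \<rho> assume ur: "u \<in> \<rho>"
    have "z \<rho> = (\<Sum>v\<in>X. cone u (\<gamma> v) \<rho>)" unfolding z_def using Z(3) ur by simp
    also have "\<dots> = cone u (\<lambda>\<sigma>. \<Sum>v\<in>X. \<gamma> v \<sigma>) \<rho>" by (rule cone_sum[symmetric])
    also have "(\<lambda>\<sigma>. \<Sum>v\<in>X. \<gamma> v \<sigma>) = \<zeta>" using \<zeta>sum by auto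
    finally show "z \<rho> = cone u \<zeta> \<rho>" .
  qed
  ultimately show ?thesis unfolding n_def by blast
qed




lemma extp_rel_surj:
  fixes K :: "'k::field itself"
  assumes "extp K \<Gamma> \<tau> n"
  shows "rel_surj K \<Gamma> (cost \<Gamma> \<tau>) n"
  unfolding rel_surj_def
proof (intro allI impI)
  fix c :: "'a set \<Rightarrow> 'k" assume c: "c \<in> chains \<Gamma> n \<and> bd \<Gamma> c \<in> chains (cost \<Gamma> \<tau>) (n - 1)"
  have "\<forall>\<rho>. \<tau> \<subseteq> \<rho> \<longrightarrow> bd \<Gamma> c \<rho> = 0"
    using c unfolding chains_def cost_def by blast
  then obtain z where z: "z \<in> chains \<Gamma> n" "bd \<Gamma> z = (\<lambda>_. 0)" "\<forall>\<rho>. \<tau> \<subseteq> \<rho> \<longrightarrow> z \<rho> = c \<rho>"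
    using assms[unfolded extp_def, THEN spec[of _ c]] c by blast
  have b0: "(\<lambda>_. 0) \<in> chains \<Gamma> (Suc n)" unfolding chains_def by simp
  have bd0: "bd \<Gamma> (\<lambda>_. 0::'k) \<sigma> = 0" for \<sigma> unfolding bd_def by simp
  have "(\<lambda>\<sigma>. c \<sigma> - z \<sigma> - bd \<Gamma> (\<lambda>_. 0) \<sigma>) \<in> chains (cost \<Gamma> \<tau>) n"
    unfolding chains_def mem_Collect_eq bd0
  proof (intro allI impI)
    fix \<rho> assume nz: "c \<rho> - z \<rho> - 0 \<noteq> 0"
    hence "c \<rho> \<noteq> 0 \<or> z \<rho> \<noteq> 0" by auto
    hence "\<rho> \<in> \<Gamma> \<and> card \<rho> = n" using c z(1) unfolding chains_def by blast
    moreover have "\<not> \<tau> \<subseteq> \<rho>" using z(3) nz by auto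
    ultimately show "\<rho> \<in> cost \<Gamma> \<tau> \<and> card \<rho> = n" unfolding cost_def by simp
  qed
  thus "\<exists>z\<in>chains \<Gamma> n. bd \<Gamma> z = (\<lambda>_. 0) \<and>
          (\<exists>b\<in>chains \<Gamma> (Suc n). (\<lambda>\<sigma>. c \<sigma> - z \<sigma> - bd \<Gamma> b \<sigma>) \<in> chains (cost \<Gamma> \<tau>) n)"
    using z b0 by blast
qed

lemma B_CMh:
  fixes K :: "'k::field itself"
  assumes sc: "simplicial_complex \<Delta>"
    and B: "\<forall>F\<in>\<Delta>. F \<noteq> {} \<longrightarrow> (\<forall>m. m + card F < d \<longrightarrow> hvanish K (link \<Delta> F) m)"
    and F: "F \<in> \<Delta>" "F \<noteq> {}"
  shows "CMh K (link \<Delta> F) (d - card F)"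
  unfolding CMh_def
proof (intro ballI allI impI)
  fix \<sigma> m assume s: "\<sigma> \<in> link \<Delta> F" and m: "m + card \<sigma> < d - card F"
  have u: "F \<union> \<sigma> \<in> \<Delta>" "F \<inter> \<sigma> = {}" "\<sigma> \<in> \<Delta>" using link_mem[OF s] by auto
  have c: "card (F \<union> \<sigma>) = card F + card \<sigma>"
    using u sc_finite_face[OF sc] F by (simp add: card_Un_disjoint)
  have "hvanish K (link \<Delta> (F \<union> \<sigma>)) m" using B u(1) m c F(2) by auto
  thus "hvanish K (link (link \<Delta> F) \<sigma>) m" using link_link[OF sc u(2)] by simp
qed

lemma H_DC:
  fixes K :: "'k::field itself"
  assumes sc: "simplicial_complex \<Delta>"
    and B: "\<forall>F\<in>\<Delta>. F \<noteq> {} \<longrightarrow> (\<forall>m. m + card F < d \<longrightarrow> hvanish K (link \<Delta> F) m)"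
    and H: "\<forall>\<sigma>\<in>\<Delta>. \<sigma> \<noteq> {} \<longrightarrow> (\<forall>w m. m + card \<sigma> < d \<longrightarrow> hvanish K (delete (link \<Delta> \<sigma>) {w}) m)"
    and v: "{v} \<in> \<Delta>"
  shows "DC K (link \<Delta> {v}) (d - 1)"
proof -
  have "CMh K (link \<Delta> {v}) (d - card {v})" by (rule B_CMh[OF sc B v]) simp
  moreover have "\<forall>\<sigma>\<in>link \<Delta> {v}. \<forall>w m. m + card \<sigma> < d - 1 \<longrightarrow> hvanish K (delete (link (link \<Delta> {v}) \<sigma>) {w}) m"
  proof (intro ballI allI impI)
    fix \<sigma> w m assume s: "\<sigma> \<in> link \<Delta> {v}" and m: "m + card \<sigma> < d - 1"
    have u: "{v} \<union> \<sigma> \<in> \<Delta>" "{v} \<inter> \<sigma> = {}" "\<sigma> \<in> \<Delta>" using link_mem[OF s] by auto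
    have c: "card ({v} \<union> \<sigma>) = 1 + card \<sigma>"
      using u sc_finite_face[OF sc] by (simp add: card_Un_disjoint)
    have "hvanish K (delete (link \<Delta> ({v} \<union> \<sigma>)) {w}) m" using H u(1) m c by auto
    thus "hvanish K (delete (link (link \<Delta> {v}) \<sigma>) {w}) m" using link_link[OF sc u(2)] by simp
  qed
  ultimately show ?thesis unfolding DC_def by simp
qed

lemma exists_facet:
  assumes sc: "simplicial_complex \<Delta>" and hd: "has_dim \<Delta> d" and pu: "pure \<Delta>" and s: "\<sigma> \<in> \<Delta>"
  shows "\<exists>F\<in>\<Delta>. \<sigma> \<subseteq> F \<and> card F = d"
proof -
  define M where "M = {\<rho>\<in>\<Delta>. \<sigma> \<subseteq> \<rho>}"
  have fM: "finite M" using sc unfolding M_def simplicial_complex_def by simp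
  have neM: "M \<noteq> {}" using s unfolding M_def by auto
  have "Max (card ` M) \<in> card ` M" using fM neM by (intro Max_in) auto
  then obtain F where F0: "F \<in> M" "card F = Max (card ` M)" by auto
  have F: "F \<in> M" "\<forall>\<rho>\<in>M. card \<rho> \<le> card F"
    using F0 fM by auto
  have FD: "F \<in> \<Delta>" "\<sigma> \<subseteq> F" using F(1) unfolding M_def by auto
  have maxF: "\<forall>\<rho>\<in>\<Delta>. F \<subseteq> \<rho> \<longrightarrow> \<rho> = F"
  proof (intro ballI impI)
    fix \<rho> assume r: "\<rho> \<in> \<Delta>" "F \<subseteq> \<rho>"
    hence "\<rho> \<in> M" using FD unfolding M_def by auto
    hence "card \<rho> \<le> card F" using F(2) by blast
    moreover have "finite \<rho>" using sc_finite_face[OF sc r(1)] .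
    ultimately show "\<rho> = F" using card_seteq[of \<rho> F] r(2) by auto
  qed
  obtain \<sigma>d where sd: "\<sigma>d \<in> \<Delta>" "card \<sigma>d = d" using hd unfolding has_dim_def by auto
  have "card \<sigma>d \<le> card F" using pu FD(1) sd(1) maxF unfolding pure_def by blast
  moreover have "card F \<le> d" using hd FD(1) unfolding has_dim_def by blast
  ultimately show ?thesis using FD sd(2) by auto
qed

lemma full_colors:
  assumes bl: "bal \<Delta> {1..d} \<kappa>" and F: "F \<in> \<Delta>" "card F = d"
  shows "\<kappa> ` F = {1..d}"
proof -
  have "\<kappa> ` F \<subseteq> {1..d}" "card (\<kappa> ` F) = d" using bl F card_colors[OF bl F(1)] unfolding bal_def by auto
  thus ?thesis by (simp add: card_subset_eq)
qed

lemma sub_face: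
  assumes sc: "simplicial_complex \<Delta>" and bl: "bal \<Delta> {1..d} \<kappa>" and F: "F \<in> \<Delta>" "card F = d"
    and S: "S \<subseteq> {1..d}"
  shows "{x\<in>F. \<kappa> x \<in> S} \<in> rank_selected \<Delta> \<kappa> S" "card {x\<in>F. \<kappa> x \<in> S} = card S"
proof -
  have inF: "{x\<in>F. \<kappa> x \<in> S} \<in> \<Delta>" using sc_closed[OF sc F(1)] by auto
  thus "{x\<in>F. \<kappa> x \<in> S} \<in> rank_selected \<Delta> \<kappa> S" unfolding rank_selected_def by auto
  have "\<kappa> ` {x\<in>F. \<kappa> x \<in> S} = S" using full_colors[OF bl F] S by auto
  moreover have "card (\<kappa> ` {x\<in>F. \<kappa> x \<in> S}) = card {x\<in>F. \<kappa> x \<in> S}" by (rule card_colors[OF bl inF])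
  ultimately show "card {x\<in>F. \<kappa> x \<in> S} = card S" by simp
qed




lemma main_gen:
  fixes K :: "'k::field itself" and \<Delta> :: "'a::linorder set set"
  assumes sc: "simplicial_complex \<Delta>" and hd: "has_dim \<Delta> d" and pu: "pure \<Delta>"
    and bl: "bal \<Delta> {1..d} \<kappa>"
    and B: "\<forall>F\<in>\<Delta>. F \<noteq> {} \<longrightarrow> (\<forall>m. m + card F < d \<longrightarrow> hvanish K (link \<Delta> F) m)"
    and H: "\<forall>\<sigma>\<in>\<Delta>. \<sigma> \<noteq> {} \<longrightarrow> (\<forall>w m. m + card \<sigma> < d \<longrightarrow> hvanish K (delete (link \<Delta> \<sigma>) {w}) m)"
    and Sne: "S \<noteq> {}" and Ssub: "S \<subset> {1..d}"
  shows "buchsbaum_star K (rank_selected \<Delta> \<kappa> S) (card S)"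
proof -
  define \<Gamma> where "\<Gamma> = rank_selected \<Delta> \<kappa> S"
  define n where "n = card S"
  have SC: "S \<subseteq> {1..d}" using Ssub by auto
  have fS: "finite S" using SC finite_subset by blast
  have cS: "n \<ge> 1" unfolding n_def using Sne fS by (simp add: Suc_leI card_gt_0_iff)
  obtain i where i: "i \<in> {1..d}" "i \<notin> S" using Ssub by blast
  have sc\<Gamma>: "simplicial_complex \<Gamma>" unfolding \<Gamma>_def by (rule sc_rank[OF sc])
  have DCv: "DC K (link \<Delta> {v}) (card {1..d} - 1)" if "{v} \<in> \<Delta>" for v
    using H_DC[OF sc B H that] by simp
  have hd\<Gamma>: "has_dim \<Gamma> n" unfolding has_dim_def
  proof
    show "\<forall>\<sigma>\<in>\<Gamma>. card \<sigma> \<le> n"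
    proof
      fix \<sigma> assume s: "\<sigma> \<in> \<Gamma>"
      hence "\<sigma> \<in> \<Delta>" "\<kappa> ` \<sigma> \<subseteq> S" unfolding \<Gamma>_def rank_selected_def by auto
      thus "card \<sigma> \<le> n" unfolding n_def using card_colors[OF bl] card_mono[OF fS] by metis
    qed
    obtain \<sigma>d where sd: "\<sigma>d \<in> \<Delta>" "card \<sigma>d = d" using hd unfolding has_dim_def by auto
    show "\<exists>\<sigma>\<in>\<Gamma>. card \<sigma> = n" using sub_face[OF sc bl sd SC] unfolding \<Gamma>_def n_def by blast
  qed
  have pu\<Gamma>: "pure \<Gamma>" unfolding pure_def
  proof (intro ballI impI)
    fix \<sigma> \<tau> assume s: "\<sigma> \<in> \<Gamma>" and t: "\<tau> \<in> \<Gamma>" and mx: "\<forall>\<rho>\<in>\<Gamma>. \<sigma> \<subseteq> \<rho> \<longrightarrow> \<rho> = \<sigma>"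
    have sD: "\<sigma> \<in> \<Delta>" "\<kappa> ` \<sigma> \<subseteq> S" using s unfolding \<Gamma>_def rank_selected_def by auto
    obtain F where F: "F \<in> \<Delta>" "\<sigma> \<subseteq> F" "card F = d" using exists_facet[OF sc hd pu sD(1)] by blast
    have "\<sigma> \<subseteq> {x\<in>F. \<kappa> x \<in> S}" using F(2) sD(2) by auto
    hence "{x\<in>F. \<kappa> x \<in> S} = \<sigma>" using mx sub_face(1)[OF sc bl F(1,3) SC] unfolding \<Gamma>_def by blast
    hence "card \<sigma> = n" using sub_face(2)[OF sc bl F(1,3) SC] unfolding n_def by simp
    thus "card \<tau> \<le> card \<sigma>" using hd\<Gamma> t unfolding has_dim_def by auto
  qed
  have links: "\<forall>F\<in>\<Gamma>. F \<noteq> {} \<longrightarrow> (\<forall>m. m + card F < n \<longrightarrow> hvanish K (link \<Gamma> F) m)"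
  proof (intro ballI impI allI)
    fix F m assume F: "F \<in> \<Gamma>" "F \<noteq> {}" and m: "m + card F < n"
    have FD: "F \<in> \<Delta>" "\<kappa> ` F \<subseteq> S" using F unfolding \<Gamma>_def rank_selected_def by auto
    have cF: "card (\<kappa> ` F) = card F" by (rule card_colors[OF bl FD(1)])
    have "link \<Gamma> F = rank_selected (link \<Delta> F) \<kappa> S" unfolding \<Gamma>_def by (rule link_rank[OF FD(2)])
    also have "\<dots> = rank_selected (link \<Delta> F) \<kappa> (S - \<kappa> ` F)" by (rule rank_link_colors[OF bl])
    finally have lk: "link \<Gamma> F = rank_selected (link \<Delta> F) \<kappa> (S - \<kappa> ` F)" .
    have kF: "\<kappa> ` F \<subseteq> {1..d}" using FD SC by auto
    have cC: "card ({1..d} - \<kappa> ` F) = d - card F" using kF cF by (simp add: card_Diff_subset finite_subset)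
    show "hvanish K (link \<Gamma> F) m" unfolding lk
    proof (rule V_lemma[OF sc_link[OF sc FD(1)] bal_link[OF bl]])
      show "finite ({1..d} - \<kappa> ` F)" by simp
      show "CMh K (link \<Delta> F) (card ({1..d} - \<kappa> ` F))" unfolding cC by (rule B_CMh[OF sc B FD(1) F(2)])
      show "S - \<kappa> ` F \<subseteq> {1..d} - \<kappa> ` F" using SC by auto
      have "card (S - \<kappa> ` F) = card S - card F" using FD(2) cF fS by (simp add: card_Diff_subset finite_subset)
      thus "m < card (S - \<kappa> ` F)" using m unfolding n_def by simp
    qed
  qed
  have ext: "extp K \<Gamma> \<tau> n" if t: "\<tau> \<in> \<Gamma>" for \<tau>
  proof (cases "\<tau> = {}")
    case True thus ?thesis by (simp add: extp_empty)
  next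
    case False
    then obtain u where u: "u \<in> \<tau>" by auto
    have tD: "\<tau> \<in> \<Delta>" "\<kappa> ` \<tau> \<subseteq> S" using t unfolding \<Gamma>_def rank_selected_def by auto
    have ku: "\<kappa> u \<in> S" using tD u by auto
    have uf: "{u} \<in> \<Delta>" using sc_closed[OF sc tD(1)] u by blast
    have uD: "u \<in> \<Union>\<Delta>" using uf by blast
    show ?thesis
    proof (rule reduce[OF sc\<Gamma> u t])
      have lk: "link \<Gamma> {u} = rank_selected (link \<Delta> {u}) \<kappa> (S - {\<kappa> u})"
        unfolding \<Gamma>_def by (rule link_rank_colors[OF bl ku])
      have cS1: "n - 1 = card (S - {\<kappa> u})" using ku fS unfolding n_def by simp
      show "extp K (link \<Gamma> {u}) (\<tau> - {u}) (n - 1)" unfolding lk cS1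
      proof (rule G_lemma[OF sc_link[OF sc uf]])
        show "bal (link \<Delta> {u}) ({1..d} - {\<kappa> u}) \<kappa>" using bal_link[OF bl, of "{u}"] by simp
        show "finite ({1..d} - {\<kappa> u})" by simp
        have "card ({1..d} - {\<kappa> u}) = card {1..d} - 1" using ku SC by auto
        thus "DC K (link \<Delta> {u}) (card ({1..d} - {\<kappa> u}))" using DCv[OF uf] by simp
        show "S - {\<kappa> u} \<subseteq> {1..d} - {\<kappa> u}" using SC by auto
        have inj: "inj_on \<kappa> \<tau>" using bl tD(1) unfolding bal_def by blast
        have "\<tau> - {u} \<in> link \<Delta> {u}" using tD(1) sc_closed[OF sc tD(1)] u unfolding link_def
          by (auto simp: insert_absorb)
        moreover have "\<kappa> ` (\<tau> - {u}) \<subseteq> S - {\<kappa> u}" using inj u tD(2) by (auto dest: inj_onD)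
        ultimately show "\<tau> - {u} \<in> rank_selected (link \<Delta> {u}) \<kappa> (S - {\<kappa> u})"
          unfolding rank_selected_def by simp
      qed
      show "\<forall>\<zeta>::'a set \<Rightarrow> 'k. \<zeta> \<in> chains (link \<Gamma> {u}) (n - 1) \<and> (\<forall>\<sigma>. bdV (\<Union>\<Gamma>) \<zeta> \<sigma> = 0)
        \<longrightarrow> (\<exists>z\<in>chains \<Gamma> n. (\<forall>\<sigma>. bdV (\<Union>\<Gamma>) z \<sigma> = 0) \<and> (\<forall>\<rho>. u \<in> \<rho> \<longrightarrow> z \<rho> = cone u \<zeta> \<rho>))"
      proof (intro allI impI)
        fix \<zeta> :: "'a set \<Rightarrow> 'k"
        assume z: "\<zeta> \<in> chains (link \<Gamma> {u}) (n - 1) \<and> (\<forall>\<sigma>. bdV (\<Union>\<Gamma>) \<zeta> \<sigma> = 0)"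
        have f1: "finite (\<Union>\<Gamma>)" by (rule sc_finV[OF sc\<Gamma>])
        have f2: "finite (\<Union>\<Delta>)" by (rule sc_finV[OF sc])
        have GD: "\<Union>\<Gamma> \<subseteq> \<Union>\<Delta>" unfolding \<Gamma>_def rank_selected_def by auto
        have LG: "\<Union>(link \<Gamma> {u}) \<subseteq> \<Union>\<Gamma>" using link_sub by blast
        have e1: "bdV (\<Union>\<Gamma>) \<zeta> = bdV (\<Union>\<Delta>) \<zeta>"
          by (rule bdV_indep[OF f1 f2 LG]) (use LG GD chains_supp z in blast)+
        have cyc: "\<forall>\<sigma>. bdV (\<Union>\<Delta>) \<zeta> \<sigma> = 0" using z e1 by metis
        obtain zz where zz: "zz \<in> chains \<Gamma> n" "\<forall>\<sigma>. bdV (\<Union>\<Delta>) zz \<sigma> = 0" "\<forall>\<rho>. u \<in> \<rho> \<longrightarrow> zz \<rho> = cone u \<zeta> \<rho>"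
          using MS[OF sc bl _ DCv SC i(1) i(2) uD ku _ cyc] z unfolding \<Gamma>_def n_def by auto
        have e2: "bdV (\<Union>\<Gamma>) zz = bdV (\<Union>\<Delta>) zz"
          by (rule bdV_indep[OF f1 f2 subset_refl GD chains_supp[OF zz(1)]])
        show "\<exists>z\<in>chains \<Gamma> n. (\<forall>\<sigma>. bdV (\<Union>\<Gamma>) z \<sigma> = 0) \<and> (\<forall>\<rho>. u \<in> \<rho> \<longrightarrow> z \<rho> = cone u \<zeta> \<rho>)"
          using zz e2 by metis
      qed
    qed
  qed
  show ?thesis unfolding buchsbaum_star_def buchsbaum_def \<Gamma>_def[symmetric] n_def[symmetric]
    using sc\<Gamma> hd\<Gamma> pu\<Gamma> links extp_rel_surj[OF ext] by blast
qed




lemma bal_of_balanced: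
  assumes sc: "simplicial_complex \<Delta>" and b: "balanced \<Delta> d \<kappa>"
  shows "bal \<Delta> {1..d} \<kappa>"
  unfolding bal_def
proof
  fix \<sigma> assume s: "\<sigma> \<in> \<Delta>"
  have "\<kappa> ` \<sigma> \<subseteq> {1..d}" using b s unfolding balanced_def vertices_def by blast
  moreover have "inj_on \<kappa> \<sigma>"
  proof (rule inj_onI, rule ccontr)
    fix u v assume uv: "u \<in> \<sigma>" "v \<in> \<sigma>" "\<kappa> u = \<kappa> v" "u \<noteq> v"
    have "{u, v} \<in> \<Delta>" using sc_closed[OF sc s] uv by auto
    thus False using b uv unfolding balanced_def by blast
  qed
  ultimately show "\<kappa> ` \<sigma> \<subseteq> {1..d} \<and> inj_on \<kappa> \<sigma>" by simp
qed

lemma H_of_doubly: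
  fixes K :: "'k::field itself" and \<Delta> :: "'a::linorder set set"
  assumes db: "doubly_buchsbaum K \<Delta> d"
  shows "\<forall>\<sigma>\<in>\<Delta>. \<sigma> \<noteq> {} \<longrightarrow> (\<forall>w m. m + card \<sigma> < d \<longrightarrow> hvanish K (delete (link \<Delta> \<sigma>) {w}) m)"
proof (intro ballI impI allI)
  fix \<sigma> w m assume s: "\<sigma> \<in> \<Delta>" "\<sigma> \<noteq> {}" and m: "m + card \<sigma> < d"
  have bb: "buchsbaum K \<Delta> d" using db unfolding doubly_buchsbaum_def by blast
  have B: "hvanish K (link \<Delta> \<sigma>) m" using bb s m unfolding buchsbaum_def by blast
  show "hvanish K (delete (link \<Delta> \<sigma>) {w}) m"
  proof (cases "w \<in> \<sigma> \<or> w \<notin> vertices \<Delta>")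
    case True
    hence "delete (link \<Delta> \<sigma>) {w} = link \<Delta> \<sigma>" unfolding delete_def link_def vertices_def by auto
    thus ?thesis using B by simp
  next
    case False
    hence w: "w \<notin> \<sigma>" "w \<in> vertices \<Delta>" by auto
    have bw: "buchsbaum K (delete \<Delta> {w}) d" using db w(2) unfolding doubly_buchsbaum_def by blast
    have "\<sigma> \<in> delete \<Delta> {w}" using s w unfolding delete_def by auto
    hence "hvanish K (link (delete \<Delta> {w}) \<sigma>) m" using bw s(2) m unfolding buchsbaum_def by blast
    thus ?thesis using link_delete[OF w(1)] by simp
  qed
qed

lemma rel_surj_extp:
  fixes K :: "'k::field itself" and \<Gamma> :: "'a::linorder set set"
  assumes sc: "simplicial_complex \<Gamma>" and hd: "has_dim \<Gamma> n" and rs: "rel_surj K \<Gamma> (cost \<Gamma> \<tau>) n"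
  shows "extp K \<Gamma> \<tau> n"
  unfolding extp_def
proof (intro allI impI)
  fix c :: "'a set \<Rightarrow> 'k" assume c: "c \<in> chains \<Gamma> n \<and> (\<forall>\<rho>. \<tau> \<subseteq> \<rho> \<longrightarrow> bd \<Gamma> c \<rho> = 0)"
  have "bd \<Gamma> c \<in> chains (cost \<Gamma> \<tau>) (n - 1)" unfolding chains_def mem_Collect_eq
  proof (intro allI impI)
    fix \<rho> assume nz: "bd \<Gamma> c \<rho> \<noteq> 0"
    then obtain v where v0: "v \<in> {v. v \<notin> \<rho> \<and> insert v \<rho> \<in> \<Gamma>}" "(- 1) ^ card {u\<in>\<rho>. u < v} * c (insert v \<rho>) \<noteq> 0"
      unfolding bd_def using sum.not_neutral_contains_not_neutral by blast
    hence v: "v \<notin> \<rho>" "insert v \<rho> \<in> \<Gamma>" "c (insert v \<rho>) \<noteq> 0" by auto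
    have r: "\<rho> \<in> \<Gamma>" using sc_closed[OF sc v(2)] by blast
    have "card (insert v \<rho>) = n" using c v(3) unfolding chains_def by blast
    hence "card \<rho> = n - 1" using v(1) sc_finite_face[OF sc r] by simp
    moreover have "\<not> \<tau> \<subseteq> \<rho>" using c nz by blast
    ultimately show "\<rho> \<in> cost \<Gamma> \<tau> \<and> card \<rho> = n - 1" using r unfolding cost_def by simp
  qed
  then obtain z b where z: "z \<in> chains \<Gamma> n" "bd \<Gamma> z = (\<lambda>_. 0)" "b \<in> chains \<Gamma> (Suc n)"
    "(\<lambda>\<sigma>. c \<sigma> - z \<sigma> - bd \<Gamma> b \<sigma>) \<in> chains (cost \<Gamma> \<tau>) n"
    using rs c unfolding rel_surj_def by blast
  have b0: "b \<sigma> = 0" for \<sigma>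
  proof (rule ccontr)
    assume "b \<sigma> \<noteq> 0"
    hence "\<sigma> \<in> \<Gamma>" "card \<sigma> = Suc n" using z(3) unfolding chains_def by auto
    thus False using hd unfolding has_dim_def by auto
  qed
  have "bd \<Gamma> b \<sigma> = 0" for \<sigma> unfolding bd_def b0 by simp
  hence bb: "\<forall>\<rho>. \<tau> \<subseteq> \<rho> \<longrightarrow> z \<rho> = c \<rho>" 
  proof (intro allI impI)
    fix \<rho> assume t: "\<tau> \<subseteq> \<rho>" and bd0: "\<And>\<sigma>. bd \<Gamma> b \<sigma> = 0"
    show "z \<rho> = c \<rho>"
    proof (rule ccontr)
      assume "z \<rho> \<noteq> c \<rho>"
      hence "c \<rho> - z \<rho> - bd \<Gamma> b \<rho> \<noteq> 0" using bd0 by simp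
      hence "\<rho> \<in> cost \<Gamma> \<tau>" using z(4) unfolding chains_def by blast
      thus False using t unfolding cost_def by blast
    qed
  qed
  thus "\<exists>z\<in>chains \<Gamma> n. bd \<Gamma> z = (\<lambda>_. 0) \<and> (\<forall>\<rho>. \<tau> \<subseteq> \<rho> \<longrightarrow> z \<rho> = c \<rho>)" using z by blast
qed




lemma R_aux:
  fixes K :: "'k::field itself" and \<Delta> :: "'a::linorder set set"
  assumes sc: "simplicial_complex \<Delta>" and hd: "has_dim \<Delta> d"
    and rs: "\<forall>\<tau>\<in>\<Delta>. rel_surj K \<Delta> (cost \<Delta> \<tau>) d"
  shows "\<forall>\<sigma>\<in>\<Delta>. card \<sigma> = k \<longrightarrow> (\<forall>\<tau>\<in>link \<Delta> \<sigma>. extp K (link \<Delta> \<sigma>) \<tau> (d - card \<sigma>))"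
proof (induction k)
  case 0
  show ?case
  proof (intro ballI impI)
    fix \<sigma> \<tau> assume s: "\<sigma> \<in> \<Delta>" "card \<sigma> = 0" and t: "\<tau> \<in> link \<Delta> \<sigma>"
    have "\<sigma> = {}" using s sc_finite_face[OF sc] by auto
    hence L: "link \<Delta> \<sigma> = \<Delta>" by (simp add: link_empty)
    show "extp K (link \<Delta> \<sigma>) \<tau> (d - card \<sigma>)" unfolding L using s(2)
      using rel_surj_extp[OF sc hd] rs t L by auto
  qed
next
  case (Suc k)
  show ?case
  proof (intro ballI impI)
    fix \<sigma> \<tau> assume s: "\<sigma> \<in> \<Delta>" "card \<sigma> = Suc k" and t: "\<tau> \<in> link \<Delta> \<sigma>"
    have fs: "finite \<sigma>" using sc_finite_face[OF sc s(1)] .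
    obtain x where x: "x \<in> \<sigma>" using s(2) by (metis card.empty ex_in_conv nat.distinct(1))
    define \<sigma>0 where "\<sigma>0 = \<sigma> - {x}"
    have s0: "\<sigma>0 \<in> \<Delta>" "card \<sigma>0 = k" using sc_closed[OF sc s(1)] s(2) fs x unfolding \<sigma>0_def by auto
    define L0 where "L0 = link \<Delta> \<sigma>0"
    have scL0: "simplicial_complex L0" unfolding L0_def by (rule sc_link[OF sc s0(1)])
    have LL: "link L0 {x} = link \<Delta> \<sigma>"
    proof -
      have "link L0 {x} = link \<Delta> (\<sigma>0 \<union> {x})" unfolding L0_def by (rule link_link[OF sc]) (simp add: \<sigma>0_def)
      also have "\<sigma>0 \<union> {x} = \<sigma>" unfolding \<sigma>0_def using x by auto
      finally show ?thesis .
    qed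
    have cd: "card \<sigma> \<le> d" using hd s(1) unfolding has_dim_def by auto
    define e where "e = d - card \<sigma>"
    have e0: "d - card \<sigma>0 = Suc e" unfolding e_def using s s0 cd by simp
    have xL0: "{x} \<in> L0" unfolding L0_def link_def using s(1) x by (auto simp: \<sigma>0_def insert_absorb Un_commute)
      (use sc_closed[OF sc s(1)] x in auto)
    define V where "V = \<Union>L0"
    have fV: "finite V" unfolding V_def by (rule sc_finV[OF scL0])
    have xV: "x \<in> V" using xL0 unfolding V_def by blast
    have VL: "\<Union>(link L0 {x}) \<subseteq> V" unfolding V_def using link_sub by blast
    have tL: "\<tau> \<in> link L0 {x}" using t LL by simp
    have xt: "insert x \<tau> \<in> L0" using tL unfolding link_def by auto
    have xnt: "x \<notin> \<tau>" using tL unfolding link_def by auto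
    have IH: "extp K L0 (insert x \<tau>) (Suc e)" using Suc.IH s0 xt e0 unfolding L0_def by metis
    show "extp K (link \<Delta> \<sigma>) \<tau> (d - card \<sigma>)" unfolding LL[symmetric] e_def[symmetric]
      unfolding extp_bdV[OF fV VL]
    proof (intro allI impI)
      fix c :: "'a set \<Rightarrow> 'k" assume c: "c \<in> chains (link L0 {x}) e \<and> (\<forall>\<rho>. \<tau> \<subseteq> \<rho> \<longrightarrow> bdV V c \<rho> = 0)"
      have cx: "c \<rho> = 0" if "x \<in> \<rho>" for \<rho> using c that unfolding chains_def link_def by blast
      have fc: "fs c" using chains_fs[OF sc_link[OF scL0 xL0]] c by blast
      have cc: "cone x c \<in> chains L0 (Suc e)" by (rule cone_chain[OF scL0]) (use c in auto)
      have crel: "\<forall>\<rho>. insert x \<tau> \<subseteq> \<rho> \<longrightarrow> bdV V (cone x c) \<rho> = 0"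
      proof (intro allI impI)
        fix \<rho> assume r: "insert x \<tau> \<subseteq> \<rho>"
        have "bdV V (cone x c) \<rho> = c \<rho> - cone x (bdV V c) \<rho>" by (rule cone_bdV[OF fV xV fc cx])
        also have "c \<rho> = 0" using cx r by auto
        also have "cone x (bdV V c) \<rho> = 0"
        proof -
          have "\<tau> \<subseteq> \<rho> - {x}" using r xnt by auto
          hence "bdV V c (\<rho> - {x}) = 0" using c by blast
          thus ?thesis unfolding cone_def by simp
        qed
        finally show "bdV V (cone x c) \<rho> = 0" by simp
      qed
      have VL0: "\<Union>L0 \<subseteq> V" unfolding V_def by simp
      obtain Y0 where Y0: "Y0 \<in> chains L0 (Suc e)" "\<forall>\<sigma>. bdV V Y0 \<sigma> = 0" "\<forall>\<rho>. insert x \<tau> \<subseteq> \<rho> \<longrightarrow> Y0 \<rho> = cone x c \<rho>"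
        using IH[unfolded extp_bdV[OF fV VL0], rule_format, of "cone x c"] cc crel by blast
      define Y where "Y = restr x Y0"
      have Ych: "Y \<in> chains (link L0 {x}) e" unfolding Y_def using restr_chain[OF scL0 Y0(1)] by simp
      have fY0: "fs Y0" by (rule chains_fs[OF scL0 Y0(1)])
      have Ycyc: "\<forall>\<sigma>. bdV V Y \<sigma> = 0"
      proof
        fix \<sigma>
        have "bdV V Y \<sigma> = - restr x (bdV V Y0) \<sigma>" unfolding Y_def by (rule bdV_restr[OF fV xV fY0])
        thus "bdV V Y \<sigma> = 0" using Y0(2) by (simp add: restr_def)
      qed
      have Yag: "\<forall>\<rho>. \<tau> \<subseteq> \<rho> \<longrightarrow> Y \<rho> = c \<rho>"
      proof (intro allI impI)
        fix \<rho> assume r: "\<tau> \<subseteq> \<rho>"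
        show "Y \<rho> = c \<rho>"
        proof (cases "x \<in> \<rho>")
          case True thus ?thesis using cx unfolding Y_def by (simp add: restr_vanish)
        next
          case False
          have "Y \<rho> = osgn x \<rho> * Y0 (insert x \<rho>)" unfolding Y_def restr_def using False by simp
          also have "Y0 (insert x \<rho>) = cone x c (insert x \<rho>)" using Y0(3) r by auto
          also have "cone x c (insert x \<rho>) = osgn x \<rho> * c \<rho>"
          proof -
            have "insert x \<rho> - {x} = \<rho>" using False by auto
            thus ?thesis unfolding cone_def by simp
          qed
          finally show ?thesis by (simp add: mult.assoc[symmetric] osgn_sq)
        qed
      qed
      show "\<exists>z\<in>chains (link L0 {x}) e. (\<forall>\<sigma>. bdV V z \<sigma> = 0) \<and> (\<forall>\<rho>. \<tau> \<subseteq> \<rho> \<longrightarrow> z \<rho> = c \<rho>)"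
        using Ych Ycyc Yag by blast
    qed
  qed
qed




lemma P2:
  fixes K :: "'k::field itself" and \<Delta> :: "'a::linorder set set"
  assumes sc: "simplicial_complex \<Delta>" and hd: "has_dim \<Delta> d"
    and B: "\<forall>F\<in>\<Delta>. F \<noteq> {} \<longrightarrow> (\<forall>m. m + card F < d \<longrightarrow> hvanish K (link \<Delta> F) m)"
    and rs: "\<forall>\<tau>\<in>\<Delta>. rel_surj K \<Delta> (cost \<Delta> \<tau>) d"
  shows "\<forall>\<sigma>\<in>\<Delta>. \<sigma> \<noteq> {} \<longrightarrow> (\<forall>w m. m + card \<sigma> < d \<longrightarrow> hvanish K (delete (link \<Delta> \<sigma>) {w}) m)"
proof (intro ballI impI allI)
  fix \<sigma> w m assume s: "\<sigma> \<in> \<Delta>" "\<sigma> \<noteq> {}" and m: "m + card \<sigma> < d"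
  define L where "L = link \<Delta> \<sigma>"
  define e where "e = d - card \<sigma>"
  have me: "m < e" using m unfolding e_def by simp
  have scL: "simplicial_complex L" unfolding L_def by (rule sc_link[OF sc s(1)])
  define V where "V = \<Union>L"
  have fV: "finite V" unfolding V_def by (rule sc_finV[OF scL])
  have cmL: "CMh K L e" unfolding L_def e_def by (rule B_CMh[OF sc B s])
  have hL: "hvanish K L m" using cmL sc_empty[OF scL] me unfolding CMh_def by (auto simp: link_empty)
  have VL: "\<Union>L \<subseteq> V" unfolding V_def by simp
  have Vd: "\<Union>(delete L {w}) \<subseteq> V" unfolding V_def delete_def by auto
  have dsub: "delete L {w} \<subseteq> L" unfolding delete_def by auto
  show "hvanish K (delete (link \<Delta> \<sigma>) {w}) m" unfolding L_def[symmetric] hvanish_bdV[OF fV Vd]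
  proof (intro allI impI)
    fix \<beta> :: "'a set \<Rightarrow> 'k" assume \<beta>: "\<beta> \<in> chains (delete L {w}) m \<and> (\<forall>\<sigma>. bdV V \<beta> \<sigma> = 0)"
    have \<beta>L: "\<beta> \<in> chains L m" using chains_mono[OF dsub] \<beta> by blast
    obtain b where b: "b \<in> chains L (Suc m)" "\<forall>\<sigma>. bdV V b \<sigma> = \<beta> \<sigma>"
      using hL[unfolded hvanish_bdV[OF fV VL], rule_format, of \<beta>] \<beta>L \<beta> by blast
    show "\<exists>b\<in>chains (delete L {w}) (Suc m). \<forall>\<sigma>. bdV V b \<sigma> = \<beta> \<sigma>"
    proof (cases "w \<in> V")
      case False
      have "b \<in> chains (delete L {w}) (Suc m)"
        using b(1) False unfolding chains_def delete_def V_def by auto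
      thus ?thesis using b(2) by blast
    next
      case True
      have wf: "{w} \<in> L" using vertex_face[OF scL] True unfolding V_def by blast
      have fb: "fs b" by (rule chains_fs[OF scL b(1)])
      define \<gamma> where "\<gamma> = restr w b"
      have g: "\<gamma> \<in> chains (link L {w}) m" unfolding \<gamma>_def using restr_chain[OF scL b(1)] by simp
      have gw: "\<And>\<rho>. w \<in> \<rho> \<Longrightarrow> \<gamma> \<rho> = 0" unfolding \<gamma>_def by (rule restr_vanish)
      have fg: "fs \<gamma>" unfolding \<gamma>_def by (rule fs_restr[OF fb])
      have \<beta>w: "\<beta> \<rho> = 0" if "w \<in> \<rho>" for \<rho> using \<beta> that unfolding chains_def delete_def by blast
      have gcyc: "bdV V \<gamma> \<sigma> = 0" for \<sigma>
      proof -
        have "bdV V \<gamma> \<sigma> = - restr w (bdV V b) \<sigma>" unfolding \<gamma>_def by (rule bdV_restr[OF fV True fb])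
        also have "restr w (bdV V b) \<sigma> = 0" using b(2) \<beta>w by (simp add: restr_def)
        finally show ?thesis by simp
      qed
      have bsplit: "bdV V b \<sigma> = bdV V (cone w \<gamma>) \<sigma> + bdV V (\<lambda>\<rho>. if w \<in> \<rho> then 0 else b \<rho>) \<sigma>" for \<sigma>
      proof -
        have "b = (\<lambda>\<rho>. cone w \<gamma> \<rho> + (if w \<in> \<rho> then 0 else b \<rho>))"
          unfolding \<gamma>_def cone_restr by auto
        hence "bdV V b \<sigma> = bdV V (\<lambda>\<rho>. cone w \<gamma> \<rho> + (if w \<in> \<rho> then 0 else b \<rho>)) \<sigma>" by simp
        thus ?thesis by (simp only: bdV_add)
      qed
      have cb: "bdV V (cone w \<gamma>) \<sigma> = \<gamma> \<sigma>" for \<sigma>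
      proof -
        have "bdV V (cone w \<gamma>) \<sigma> = \<gamma> \<sigma> - cone w (bdV V \<gamma>) \<sigma>" by (rule cone_bdV[OF fV True fg gw])
        thus ?thesis using gcyc by (simp add: cone_def)
      qed
      show ?thesis
      proof (cases "Suc m < e")
        case True
        have hv: "hvanish K (link L {w}) m" using cmL wf True unfolding CMh_def by auto
        have VLw: "\<Union>(link L {w}) \<subseteq> V" unfolding V_def using link_sub by blast
        obtain \<delta> where \<delta>: "\<delta> \<in> chains (link L {w}) (Suc m)" "\<forall>\<sigma>. bdV V \<delta> \<sigma> = \<gamma> \<sigma>"
          using hv[unfolded hvanish_bdV[OF fV VLw], rule_format, of \<gamma>] g gcyc by blast
        define b' where "b' = (\<lambda>\<rho>. (if w \<in> \<rho> then 0 else b \<rho>) + \<delta> \<rho>)"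
        have "b' \<in> chains (delete L {w}) (Suc m)" unfolding chains_def mem_Collect_eq
        proof (intro allI impI)
          fix \<rho> assume nz: "b' \<rho> \<noteq> 0"
          show "\<rho> \<in> delete L {w} \<and> card \<rho> = Suc m"
          proof (cases "\<delta> \<rho> = 0")
            case True
            hence "w \<notin> \<rho>" "b \<rho> \<noteq> 0" using nz unfolding b'_def by (auto split: if_splits)
            thus ?thesis using b(1) unfolding chains_def delete_def by auto
          next
            case False
            thus ?thesis using \<delta>(1) unfolding chains_def delete_def link_def by auto
          qed
        qed
        moreover have "\<forall>\<sigma>. bdV V b' \<sigma> = \<beta> \<sigma>"
        proof
          fix \<sigma>
          have "bdV V b' \<sigma> = bdV V (\<lambda>\<rho>. if w \<in> \<rho> then 0 else b \<rho>) \<sigma> + bdV V \<delta> \<sigma>"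
            unfolding b'_def by (rule bdV_add)
          also have "bdV V (\<lambda>\<rho>. if w \<in> \<rho> then 0 else b \<rho>) \<sigma> = \<beta> \<sigma> - \<gamma> \<sigma>"
            using bsplit[of \<sigma>] cb[of \<sigma>] b(2) by simp
          finally show "bdV V b' \<sigma> = \<beta> \<sigma>" using \<delta>(2) by simp
        qed
        ultimately show ?thesis by blast
      next
        case False
        hence eS: "e = Suc m" using me by simp
        have cs: "card \<sigma> = card \<sigma>" ..
        have ext: "extp K L {w} e"
          using R_aux[OF sc hd rs, rule_format, OF s(1) refl, of "{w}"] wf unfolding L_def e_def by blast
        have cc: "cone w \<gamma> \<in> chains L e" by (rule cone_chain[OF scL]) (use g eS in auto)
        have crel: "\<forall>\<rho>. {w} \<subseteq> \<rho> \<longrightarrow> bdV V (cone w \<gamma>) \<rho> = 0" using cb gw by simp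
        obtain Y where Y: "Y \<in> chains L e" "\<forall>\<sigma>. bdV V Y \<sigma> = 0" "\<forall>\<rho>. {w} \<subseteq> \<rho> \<longrightarrow> Y \<rho> = cone w \<gamma> \<rho>"
          using ext[unfolded extp_bdV[OF fV VL], rule_format, of "cone w \<gamma>"] cc crel by blast
        define b' where "b' = (\<lambda>\<rho>. b \<rho> - Y \<rho>)"
        have bch: "b' \<in> chains L (Suc m)" unfolding b'_def by (rule chains_diff[OF b(1)]) (use Y eS in simp)
        have "b' \<in> chains (delete L {w}) (Suc m)" unfolding chains_def mem_Collect_eq
        proof (intro allI impI)
          fix \<rho> assume nz: "b' \<rho> \<noteq> 0"
          have "w \<notin> \<rho>"
          proof
            assume wr: "w \<in> \<rho>"
            have "b \<rho> = cone w \<gamma> \<rho>" unfolding \<gamma>_def cone_restr using wr by simp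
            moreover have "Y \<rho> = cone w \<gamma> \<rho>" using Y(3) wr by simp
            ultimately show False using nz unfolding b'_def by simp
          qed
          thus "\<rho> \<in> delete L {w} \<and> card \<rho> = Suc m" using bch nz unfolding chains_def delete_def by auto
        qed
        moreover have "\<forall>\<sigma>. bdV V b' \<sigma> = \<beta> \<sigma>"
          unfolding b'_def bdV_diff using b(2) Y(2) by simp
        ultimately show ?thesis by blast
      qed
    qed
  qed
qed

theorem mainTheorem1:
  fixes \<Delta> :: "'a::linorder set set" and \<kappa> :: "'a \<Rightarrow> nat" and d :: nat
    and K :: "'k::field itself"
  assumes "d \<ge> 2"
    and "simplicial_complex \<Delta>" and "has_dim \<Delta> d"
    and "balanced \<Delta> d \<kappa>"
  shows "(doubly_buchsbaum K \<Delta> d \<longrightarrow>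
            (\<forall>S. S \<noteq> {} \<and> S \<subset> {1..d} \<longrightarrow> buchsbaum_star K (rank_selected \<Delta> \<kappa> S) (card S)))
       \<and> (buchsbaum_star K \<Delta> d \<longrightarrow>
            (\<forall>S. S \<noteq> {} \<and> S \<subset> {1..d} \<longrightarrow> buchsbaum_star K (rank_selected \<Delta> \<kappa> S) (card S)))"
proof -
  note sc = assms(2) and hd = assms(3)
  have bl: "bal \<Delta> {1..d} \<kappa>" by (rule bal_of_balanced[OF sc assms(4)])
  show ?thesis
  proof (intro conjI impI allI)
    fix S assume db: "doubly_buchsbaum K \<Delta> d" and S: "S \<noteq> {} \<and> S \<subset> {1..d}"
    have bb: "buchsbaum K \<Delta> d" using db unfolding doubly_buchsbaum_def by blast
    have pu: "pure \<Delta>" and B: "\<forall>F\<in>\<Delta>. F \<noteq> {} \<longrightarrow> (\<forall>m. m + card F < d \<longrightarrow> hvanish K (link \<Delta> F) m)"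
      using bb unfolding buchsbaum_def by auto
    show "buchsbaum_star K (rank_selected \<Delta> \<kappa> S) (card S)"
      using main_gen[OF sc hd pu bl B H_of_doubly[OF db]] S by blast
  next
    fix S assume bs: "buchsbaum_star K \<Delta> d" and S: "S \<noteq> {} \<and> S \<subset> {1..d}"
    have bb: "buchsbaum K \<Delta> d" using bs unfolding buchsbaum_star_def by blast
    have rs: "\<forall>\<tau>\<in>\<Delta>. rel_surj K \<Delta> (cost \<Delta> \<tau>) d" using bs unfolding buchsbaum_star_def by blast
    have pu: "pure \<Delta>" and B: "\<forall>F\<in>\<Delta>. F \<noteq> {} \<longrightarrow> (\<forall>m. m + card F < d \<longrightarrow> hvanish K (link \<Delta> F) m)"
      using bb unfolding buchsbaum_def by auto
    show "buchsbaum_star K (rank_selected \<Delta> \<kappa> S) (card S)"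
      using main_gen[OF sc hd pu bl B P2[OF sc hd B rs]] S by blast
  qed
qed


end
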